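(* Let $\Omega\subset\mathbb{C}^n$ be a bounded domain, let $\mathcal R$ and $\mathcal R'$ be finite rank quasi-free Hilbert modules over $A(\Omega)$, and let $X:\mathcal R\to\mathcal R'$ be a module map. For each integer $k\ge0$ let $\Sigma_k=\{z\in\Omega:\operatorname{rank}(X\otimes_{A(\Omega)}1_z)=k\}$. Then the sets $\Sigma_k$ are analytic subvarieties of $\Omega$.
   Context: $A(\Omega)$ is the closure, in the supremum norm on $\Omega$, of the set of functions holomorphic on some neighbourhood of $\overline\Omega$; $\ell^2_m$ is the $m$-dimensional Hilbert space. A quasi-free Hilbert module of rank $m$ ($m$ finite) over $A(\Omega)$ is a Hilbert space $\mathcal R$ obtained as the completion of $A(\Omega)\otimes\ell^2_m$ (regarded as $\ell^2_m$-valued holomorphic functions on $\Omega$) with respect to an inner product such that: (1) for each $z\in\Omega$ evaluation at $z$ into $\ell^2_m$ is bounded, with norm locally uniformly bounded in $z$; (2) $\|\varphi F\|_{\mathcal R}\le\|\varphi\|_{A(\Omega)}\|F\|_{\mathcal R}$; (3) if $(F_i)$ is Cauchy in $\mathcal R$-norm, then $F_i(z)\to0$ for all $z$ iff $\|F_i\|_{\mathcal R}\to0$. $A(\Omega)$ acts by multiplication. A module map is a bounded linear map $X$ with $X(\varphi h)=\varphi X(h)$. For $z\in\Omega$, $\mathbb C_z$ is $\mathbb C$ with action $\varphi\cdot\lambda=\varphi(z)\lambda$; the localization $\mathcal R\otimes_{A(\Omega)}\mathbb C_z$ is identified with $\mathcal R/\mathcal R_z$, $\mathcal R_z$ the closure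 of $\{\varphi h:\varphi\in A(\Omega),\varphi(z)=0,h\in\mathcal R\}$, and $X\otimes_{A(\Omega)}1_z:\mathcal R\otimes_{A(\Omega)}\mathbb C_z\to\mathcal R'\otimes_{A(\Omega)}\mathbb C_z$ is the induced map $h\otimes1_z\mapsto Xh\otimes1_z$. *)

theory Defs
  imports "HOL-Analysis.Analysis"
begin

text \<open>Points of C^n are vectors of type complex^'n; l^2_m is complex^'m
  (the library norm on vectors is the Euclidean/l^2 norm).\<close>

definition holo_on :: "(complex^'n \<Rightarrow> complex) \<Rightarrow> (complex^'n) set \<Rightarrow> bool" where
  "holo_on f U \<longleftrightarrow> (\<forall>z\<in>U. \<exists>D. (f has_derivative D) (at z) \<and> (\<forall>c v. D (c *s v) = c * D v))"

definition bounded_domain :: "(complex^'n) set \<Rightarrow> bool" where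
  "bounded_domain \<Omega> \<longleftrightarrow> open \<Omega> \<and> connected \<Omega> \<and> \<Omega> \<noteq> {} \<and> bounded \<Omega>"

text \<open>A(Omega): sup-norm closure on Omega of functions holomorphic on a neighbourhood
  of the closure of Omega (functions are taken to vanish off Omega).\<close>
definition A_alg :: "(complex^'n) set \<Rightarrow> (complex^'n \<Rightarrow> complex) set" where
  "A_alg \<Omega> = {\<phi>. (\<forall>z. z \<notin> \<Omega> \<longrightarrow> \<phi> z = 0) \<and>
      (\<forall>\<epsilon>>0. \<exists>g U. open U \<and> closure \<Omega> \<subseteq> U \<and> holo_on g U \<and> (\<forall>z\<in>\<Omega>. norm (\<phi> z - g z) < \<epsilon>))}"

definition sup_norm :: "(complex^'n) set \<Rightarrow> (complex^'n \<Rightarrow> complex) \<Rightarrow> real" where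
  "sup_norm \<Omega> \<phi> = (SUP z\<in>\<Omega>. norm (\<phi> z))"

definition mult :: "(complex^'n \<Rightarrow> complex) \<Rightarrow> (complex^'n \<Rightarrow> complex^'m) \<Rightarrow> (complex^'n \<Rightarrow> complex^'m)" where
  "mult \<phi> F = (\<lambda>z. \<phi> z *s F z)"

text \<open>A(Omega) tensor l^2_m, as l^2_m-valued functions.\<close>
definition A_tensor :: "(complex^'n) set \<Rightarrow> (complex^'n \<Rightarrow> complex^'m) set" where
  "A_tensor \<Omega> = {F. \<forall>j. (\<lambda>z. F z $ j) \<in> A_alg \<Omega>}"

definition hnorm :: "(('n \<Rightarrow> 'v) \<Rightarrow> ('n \<Rightarrow> 'v) \<Rightarrow> complex) \<Rightarrow> ('n \<Rightarrow> 'v) \<Rightarrow> real" where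
  "hnorm ip F = sqrt (Re (ip F F))"

text \<open>Quasi-free Hilbert module of rank CARD('m) over A(Omega), realised as a Hilbert space H
  of l^2_m-valued functions on Omega (vanishing off Omega) with inner product ip
  (linear in the first argument).\<close>
definition quasi_free ::
  "(complex^'n) set \<Rightarrow> (complex^'n \<Rightarrow> complex^'m) set \<Rightarrow>
   ((complex^'n \<Rightarrow> complex^'m) \<Rightarrow> (complex^'n \<Rightarrow> complex^'m) \<Rightarrow> complex) \<Rightarrow> bool" where
  "quasi_free \<Omega> H ip \<longleftrightarrow>
    (\<lambda>z. 0) \<in> H \<and>
    (\<forall>F\<in>H. \<forall>G\<in>H. \<forall>c. (\<lambda>z. c *s F z + G z) \<in> H) \<and>
    (\<forall>F\<in>H. \<forall>z. z \<notin> \<Omega> \<longrightarrow> F z = 0) \<and>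
    (\<forall>F\<in>H. \<forall>G\<in>H. \<forall>K\<in>H. \<forall>c. ip (\<lambda>z. c *s F z + G z) K = c * ip F K + ip G K) \<and>
    (\<forall>F\<in>H. \<forall>G\<in>H. ip F G = cnj (ip G F)) \<and>
    (\<forall>F\<in>H. Re (ip F F) \<ge> 0 \<and> (ip F F = 0 \<longrightarrow> F = (\<lambda>z. 0))) \<and>
    (\<forall>S. (\<forall>i. S i \<in> H) \<and> (\<forall>\<epsilon>>0. \<exists>N. \<forall>i\<ge>N. \<forall>j\<ge>N. hnorm ip (\<lambda>z. S i z - S j z) < \<epsilon>)
         \<longrightarrow> (\<exists>F\<in>H. (\<lambda>i. hnorm ip (\<lambda>z. S i z - F z)) \<longlonglongrightarrow> 0)) \<and>
    A_tensor \<Omega> \<subseteq> H \<and>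
    (\<forall>F\<in>H. \<forall>\<epsilon>>0. \<exists>G\<in>A_tensor \<Omega>. hnorm ip (\<lambda>z. F z - G z) < \<epsilon>) \<and>
    (\<forall>z\<in>\<Omega>. \<exists>r>0. \<exists>C. \<forall>w\<in>ball z r \<inter> \<Omega>. \<forall>F\<in>H. norm (F w) \<le> C * hnorm ip F) \<and>
    (\<forall>\<phi>\<in>A_alg \<Omega>. \<forall>F\<in>H. mult \<phi> F \<in> H \<and> hnorm ip (mult \<phi> F) \<le> sup_norm \<Omega> \<phi> * hnorm ip F) \<and>
    (\<forall>S. (\<forall>i. S i \<in> H) \<and> (\<forall>\<epsilon>>0. \<exists>N. \<forall>i\<ge>N. \<forall>j\<ge>N. hnorm ip (\<lambda>z. S i z - S j z) < \<epsilon>)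
         \<longrightarrow> ((\<forall>z\<in>\<Omega>. (\<lambda>i. S i z) \<longlonglongrightarrow> 0) \<longleftrightarrow> (\<lambda>i. hnorm ip (S i)) \<longlonglongrightarrow> 0))"

definition module_map ::
  "(complex^'n) set \<Rightarrow> (complex^'n \<Rightarrow> complex^'m) set \<Rightarrow>
   ((complex^'n \<Rightarrow> complex^'m) \<Rightarrow> (complex^'n \<Rightarrow> complex^'m) \<Rightarrow> complex) \<Rightarrow>
   (complex^'n \<Rightarrow> complex^'p) set \<Rightarrow>
   ((complex^'n \<Rightarrow> complex^'p) \<Rightarrow> (complex^'n \<Rightarrow> complex^'p) \<Rightarrow> complex) \<Rightarrow>
   ((complex^'n \<Rightarrow> complex^'m) \<Rightarrow> (complex^'n \<Rightarrow> complex^'p)) \<Rightarrow> bool" where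
  "module_map \<Omega> H ip H' ip' X \<longleftrightarrow>
    (\<forall>F\<in>H. X F \<in> H') \<and>
    (\<forall>F\<in>H. \<forall>G\<in>H. \<forall>c. X (\<lambda>z. c *s F z + G z) = (\<lambda>z. c *s X F z + X G z)) \<and>
    (\<exists>C. \<forall>F\<in>H. hnorm ip' (X F) \<le> C * hnorm ip F) \<and>
    (\<forall>\<phi>\<in>A_alg \<Omega>. \<forall>F\<in>H. X (mult \<phi> F) = mult \<phi> (X F))"

text \<open>R_z: closure of the span of {phi h : phi in A(Omega), phi z = 0, h in R}.\<close>
definition loc_sub ::
  "(complex^'n) set \<Rightarrow> (complex^'n \<Rightarrow> complex^'m) set \<Rightarrow>
   ((complex^'n \<Rightarrow> complex^'m) \<Rightarrow> (complex^'n \<Rightarrow> complex^'m) \<Rightarrow> complex) \<Rightarrow>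
   complex^'n \<Rightarrow> (complex^'n \<Rightarrow> complex^'m) set" where
  "loc_sub \<Omega> H ip z = {G\<in>H. \<forall>\<epsilon>>0. \<exists>(n::nat) \<phi> h.
      (\<forall>i<n. \<phi> i \<in> A_alg \<Omega> \<and> \<phi> i z = 0 \<and> h i \<in> H) \<and>
      hnorm ip (\<lambda>w. G w - (\<Sum>i<n. mult (\<phi> i) (h i) w)) < \<epsilon>}"

text \<open>Rank of X tensor 1_z : R/R_z \<rightarrow> R'/R'_z, i.e. the dimension of its image
  {Xh + R'_z}, i.e. the maximal number of vectors X h_i linearly independent modulo R'_z.\<close>
definition loc_rank ::
  "(complex^'n) set \<Rightarrow> (complex^'n \<Rightarrow> complex^'m) set \<Rightarrow>
   (complex^'n \<Rightarrow> complex^'p) set \<Rightarrow>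
   ((complex^'n \<Rightarrow> complex^'p) \<Rightarrow> (complex^'n \<Rightarrow> complex^'p) \<Rightarrow> complex) \<Rightarrow>
   ((complex^'n \<Rightarrow> complex^'m) \<Rightarrow> (complex^'n \<Rightarrow> complex^'p)) \<Rightarrow> complex^'n \<Rightarrow> nat" where
  "loc_rank \<Omega> H H' ip' X z = (GREATEST k. \<exists>h. (\<forall>i<k. h i \<in> H) \<and>
      (\<forall>c. (\<lambda>w. \<Sum>i<k. c i *s X (h i) w) \<in> loc_sub \<Omega> H' ip' z \<longrightarrow> (\<forall>i<k. c i = 0)))"

definition analytic_subvariety :: "(complex^'n) set \<Rightarrow> (complex^'n) set \<Rightarrow> bool" where
  "analytic_subvariety \<Omega> V \<longleftrightarrow> V \<subseteq> \<Omega> \<and>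
    (\<forall>p\<in>V. \<exists>U. open U \<and> p \<in> U \<and> U \<subseteq> \<Omega> \<and>
       (\<exists>(N::nat) f. (\<forall>i<N. holo_on (f i) U) \<and> V \<inter> U = {w\<in>U. \<forall>i<N. f i w = 0}))"

end

theory Submission
  imports Defs "HOL-Complex_Analysis.Cauchy_Integral_Formula"
begin

lemma holo_on_const: "holo_on (\<lambda>z. c) U"
  unfolding holo_on_def by (auto intro!: exI[of _ "\<lambda>v. 0"])

lemma holo_on_subset: "holo_on f U \<Longrightarrow> V \<subseteq> U \<Longrightarrow> holo_on f V"
  unfolding holo_on_def by blast

lemma holo_on_add: "holo_on f U \<Longrightarrow> holo_on g U \<Longrightarrow> holo_on (\<lambda>z. f z + g z) U"
  unfolding holo_on_def
proof (intro ballI)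
  fix z assume f: "\<forall>z\<in>U. \<exists>D. (f has_derivative D) (at z) \<and> (\<forall>c v. D (c *s v) = c * D v)"
    and g: "\<forall>z\<in>U. \<exists>D. (g has_derivative D) (at z) \<and> (\<forall>c v. D (c *s v) = c * D v)" and z: "z \<in> U"
  obtain D1 where D1: "(f has_derivative D1) (at z)" "\<forall>c v. D1 (c *s v) = c * D1 v" using f z by blast
  obtain D2 where D2: "(g has_derivative D2) (at z)" "\<forall>c v. D2 (c *s v) = c * D2 v" using g z by blast
  show "\<exists>D. ((\<lambda>z. f z + g z) has_derivative D) (at z) \<and> (\<forall>c v. D (c *s v) = c * D v)"
    by (rule exI[of _ "\<lambda>v. D1 v + D2 v"]) (use D1 D2 in \<open>auto intro!: has_derivative_add simp: algebra_simps\<close>)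
qed

lemma holo_on_mult: "holo_on f U \<Longrightarrow> holo_on g U \<Longrightarrow> holo_on (\<lambda>z. f z * g z) U"
  unfolding holo_on_def
proof (intro ballI)
  fix z assume f: "\<forall>z\<in>U. \<exists>D. (f has_derivative D) (at z) \<and> (\<forall>c v. D (c *s v) = c * D v)"
    and g: "\<forall>z\<in>U. \<exists>D. (g has_derivative D) (at z) \<and> (\<forall>c v. D (c *s v) = c * D v)" and z: "z \<in> U"
  obtain D1 where D1: "(f has_derivative D1) (at z)" "\<forall>c v. D1 (c *s v) = c * D1 v" using f z by blast
  obtain D2 where D2: "(g has_derivative D2) (at z)" "\<forall>c v. D2 (c *s v) = c * D2 v" using g z by blast
  show "\<exists>D. ((\<lambda>z. f z * g z) has_derivative D) (at z) \<and> (\<forall>c v. D (c *s v) = c * D v)"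
  proof (intro exI conjI)
    show "((\<lambda>z. f z * g z) has_derivative (\<lambda>v. f z * D2 v + D1 v * g z)) (at z)"
      using D1 D2 by (intro has_derivative_mult) auto
    show "\<forall>c v. f z * D2 (c *s v) + D1 (c *s v) * g z = c * (f z * D2 v + D1 v * g z)"
      using D1 D2 by (simp add: algebra_simps)
  qed
qed

lemma holo_on_sum: "finite I \<Longrightarrow> (\<And>i. i \<in> I \<Longrightarrow> holo_on (f i) U) \<Longrightarrow> holo_on (\<lambda>z. \<Sum>i\<in>I. f i z) U"
  by (induction I rule: finite_induct) (auto intro: holo_on_add holo_on_const)

lemma holo_on_prod: "finite I \<Longrightarrow> (\<And>i. i \<in> I \<Longrightarrow> holo_on (f i) U) \<Longrightarrow> holo_on (\<lambda>z. \<Prod>i\<in>I. f i z) U"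
  by (induction I rule: finite_induct) (auto intro: holo_on_mult holo_on_const)

lemma holo_on_cont: "holo_on f U \<Longrightarrow> z \<in> U \<Longrightarrow> isCont f z"
  unfolding holo_on_def using has_derivative_continuous by blast

lemma norm_axis_c: "norm (axis i (t::complex)) = norm t"
proof -
  have "(\<Sum>j\<in>UNIV. (norm (axis i t $ j))\<^sup>2) = (norm t)\<^sup>2"
    by (subst sum.remove[of _ i]) (auto simp: axis_def)
  then show ?thesis by (simp add: norm_vec_def L2_set_def)
qed

lemma axis_scale: "axis i (t::complex) = t *s axis i 1"
  by (simp add: axis_def vec_eq_iff)

lemma line_deriv:
  fixes x :: "complex^'n"
  assumes "(f has_derivative D) (at (x + axis i t))" "\<forall>c v. D (c *s v) = c * D v"
  shows "((\<lambda>s. f (x + axis i s)) has_field_derivative D (axis i 1)) (at t)"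
proof -
  have bl: "bounded_linear (\<lambda>s::complex. axis i s :: complex^'n)"
    by (rule bounded_linear_intro[where K=1]) (auto simp: norm_axis_c, auto simp: axis_def vec_eq_iff)
  have "((\<lambda>s. x + axis i s) has_derivative (\<lambda>s. axis i s)) (at t)"
    using has_derivative_add[OF has_derivative_const[of x] bounded_linear_imp_has_derivative[OF bl], of "at t"]
    by (simp only: add_0_left)
  from has_derivative_compose[OF this assms(1)]
  have "((\<lambda>s. f (x + axis i s)) has_derivative (\<lambda>s. D (axis i s))) (at t)" .
  moreover have "(\<lambda>s. D (axis i s)) = (\<lambda>s. s * D (axis i 1))"
  proof
    fix s :: complex
    show "D (axis i s) = s * D (axis i 1)" using assms(2) axis_scale[of i s] by metis
  qed
  moreover have e: "(\<lambda>s. s * D (axis i 1)) = (*) (D (axis i 1))" by (rule ext) (simp add: mult.commute)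
  ultimately show ?thesis unfolding has_field_derivative_def by (simp only: e)
qed


lemma axis_zero: "axis i 0 = (0::'a::zero^'n)"
  by (simp add: axis_def vec_eq_iff)

lemma holo_derivE:
  assumes "holo_on f U" "x \<in> U"
  obtains D where "(f has_derivative D) (at x)" "\<forall>c v. D (c *s v) = c * D v"
  using assms unfolding holo_on_def by blast

lemma clin_expand:
  fixes D :: "complex^'n \<Rightarrow> complex"
  assumes "linear D" "\<forall>c v. D (c *s v) = c * D v"
  shows "D h = (\<Sum>i\<in>UNIV. h $ i * D (axis i 1))"
proof -
  have "D h = D (\<Sum>i\<in>UNIV. (h$i) *s axis i 1)" by (simp add: basis_expansion)
  also have "\<dots> = (\<Sum>i\<in>UNIV. D ((h$i) *s axis i 1))" by (rule linear_sum[OF assms(1)])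
  also have "\<dots> = (\<Sum>i\<in>UNIV. h $ i * D (axis i 1))" using assms(2) by simp
  finally show ?thesis .
qed

lemma holo_uniform_limit:
  fixes f :: "nat \<Rightarrow> complex^'n \<Rightarrow> complex" and g :: "complex^'n \<Rightarrow> complex"
  assumes U: "open U" and hf: "\<And>n. holo_on (f n) U"
    and ul: "\<And>z. z \<in> U \<Longrightarrow> \<exists>R>0. ball z R \<subseteq> U \<and>
               (\<forall>e>0. \<exists>N. \<forall>n\<ge>N. \<forall>w\<in>ball z R. norm (f n w - g w) < e)"
  shows "holo_on g U"
  unfolding holo_on_def
proof
  fix z assume zU: "z \<in> U"
  obtain R where R: "R > 0" "ball z R \<subseteq> U"
    and uc: "\<And>e. e > 0 \<Longrightarrow> \<exists>N. \<forall>n\<ge>N. \<forall>w\<in>ball z R. norm (f n w - g w) < e"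
    using ul[OF zU] by blast
  define S where "S = ball z (R/2)"
  define \<rho> where "\<rho> = R/4"
  have \<rho>: "\<rho> > 0" using R by (simp add: \<rho>_def)
  define T :: "complex set" where "T = ball 0 (R/2)"
  have lineR: "x + axis i t \<in> ball z R" if "x \<in> S" "norm t < R/2" for x i and t :: complex
  proof -
    have "dist z (x + axis i t) \<le> dist z x + norm (axis i t)"
      by (metis dist_norm dist_triangle2 add_diff_cancel_left' norm_minus_commute)
    also have "\<dots> < R/2 + R/2" using that by (intro add_strict_mono) (auto simp: S_def norm_axis_c dist_commute)
    finally show ?thesis by simp
  qed
  define D where "D n x = (SOME D. (f n has_derivative D) (at x) \<and> (\<forall>c v. D (c *s v) = c * D v))" for n x
  have D: "(f n has_derivative D n x) (at x)" "\<forall>c v. D n x (c *s v) = c * D n x v" if xU: "x \<in> U" for n x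
  proof -
    obtain D0 where "(f n has_derivative D0) (at x)" "\<forall>c v. D0 (c *s v) = c * D0 v"
      using holo_derivE[OF hf xU] .
    then have "(f n has_derivative D n x) (at x) \<and> (\<forall>c v. D n x (c *s v) = c * D n x v)"
      unfolding D_def by (rule someI[where x=D0, OF conjI])
    then show "(f n has_derivative D n x) (at x)" "\<forall>c v. D n x (c *s v) = c * D n x v" by auto
  qed
  have fline: "((\<lambda>s. f n (x + axis i s)) has_field_derivative D n (x + axis i t) (axis i 1)) (at t)"
    if "x \<in> S" "t \<in> T" for n x i t
    using line_deriv[OF D[of "x + axis i t" n]] lineR[of x t i] that R(2) by (auto simp: T_def)
  have gline: "(\<lambda>s. g (x + axis i s)) holomorphic_on T"
    if "x \<in> S" for x i
  proof -
    have "\<exists>g'. \<forall>t \<in> T. ((\<lambda>s. g (x + axis i s)) has_field_derivative g' t) (at t) \<and>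
       ((\<lambda>n. D n (x + axis i t) (axis i 1)) \<longlongrightarrow> g' t) sequentially"
    proof (rule has_complex_derivative_uniform_sequence[where f = "\<lambda>n s. f n (x + axis i s)"])
      show "open T" by (simp add: T_def)
      show "((\<lambda>s. f n (x + axis i s)) has_field_derivative D n (x + axis i t) (axis i 1)) (at t)"
        if "t \<in> T" for n t using fline[OF \<open>x \<in> S\<close> that] .
      show "\<exists>d>0. cball t d \<subseteq> T \<and> uniform_limit (cball t d) (\<lambda>n s. f n (x + axis i s)) (\<lambda>s. g (x + axis i s)) sequentially"
        if "t \<in> T" for t
      proof (intro exI conjI)
        define d where "d = (R/2 - norm t) / 2"
        show "d > 0" using that by (simp add: d_def T_def)
        show cb: "cball t d \<subseteq> T"
        proof
          fix s assume "s \<in> cball t d"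
          then have "dist t s \<le> d" by simp
          moreover have "norm s \<le> norm t + dist t s" by (metis dist_norm norm_minus_commute norm_triangle_sub)
          moreover have "norm t < R/2" using that by (simp add: T_def)
          ultimately show "s \<in> T" by (auto simp: T_def d_def)
        qed
        show "uniform_limit (cball t d) (\<lambda>n s. f n (x + axis i s)) (\<lambda>s. g (x + axis i s)) sequentially"
          unfolding uniform_limit_iff eventually_sequentially
        proof (intro allI impI)
          fix e :: real assume "e > 0"
          obtain N where N: "\<forall>n\<ge>N. \<forall>w\<in>ball z R. norm (f n w - g w) < e" using uc[OF \<open>e > 0\<close>] by blast
          show "\<exists>N. \<forall>n\<ge>N. \<forall>s\<in>cball t d. dist (f n (x + axis i s)) (g (x + axis i s)) < e"
          proof (intro exI allI impI ballI)
            fix n s assume "N \<le> n" "s \<in> cball t d"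
            then have "s \<in> T" using cb by blast
            then have "x + axis i s \<in> ball z R" using lineR[OF \<open>x \<in> S\<close>] by (auto simp: T_def)
            then show "dist (f n (x + axis i s)) (g (x + axis i s)) < e" using N \<open>N \<le> n\<close> by (auto simp: dist_norm)
          qed
        qed
      qed
    qed
    then show ?thesis unfolding holomorphic_on_def field_differentiable_def
      by (meson has_field_derivative_at_within)
  qed
  have T0: "0 \<in> T" using R by (simp add: T_def)
  define G where "G x i = deriv (\<lambda>s. g (x + axis i s)) 0" for x i
  have Gd: "((\<lambda>s. g (x + axis i s)) has_field_derivative G x i) (at 0)" if "x \<in> S" for x i
    unfolding G_def using gline[OF that, of i] T0
    by (metis DERIV_deriv_iff_field_differentiable T_def at_within_open holomorphic_on_def open_ball)
  have bound: "\<exists>N. \<forall>n\<ge>N. \<forall>x\<in>S. \<forall>i. norm (D n x (axis i 1) - G x i) \<le> e / \<rho>" if epos: "e > 0" for e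
  proof -
    obtain N where N: "\<forall>n\<ge>N. \<forall>w\<in>ball z R. norm (f n w - g w) < e" using uc[OF epos] by blast
    show ?thesis
    proof (intro exI allI impI ballI)
      fix n x i assume n: "N \<le> n" and x: "x \<in> S"
      define \<psi> where "\<psi> s = f n (x + axis i s) - g (x + axis i s)" for s
      have hT: "\<psi> holomorphic_on T"
      proof -
        have "(\<lambda>s. f n (x + axis i s)) holomorphic_on T"
          unfolding holomorphic_on_def field_differentiable_def
          using fline[OF x] by (meson has_field_derivative_at_within)
        then show ?thesis unfolding \<psi>_def using gline[OF x, of i] by (intro holomorphic_intros)
      qed
      have sub: "cball 0 \<rho> \<subseteq> T" using R by (auto simp: T_def \<rho>_def)
      have "norm ((deriv ^^ 1) \<psi> 0) \<le> (fact 1) * e / \<rho>^1"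
      proof (rule Cauchy_inequality)
        show "\<psi> holomorphic_on ball 0 \<rho>" using hT sub by (meson ball_subset_cball holomorphic_on_subset subset_trans)
        show "continuous_on (cball 0 \<rho>) \<psi>" using hT sub by (meson holomorphic_on_imp_continuous_on continuous_on_subset)
        show "0 < \<rho>" by (rule \<rho>)
        show "norm (\<psi> s) \<le> e" if "norm (0 - s) = \<rho>" for s
        proof -
          have "s \<in> T" using sub that by auto
          then have "x + axis i s \<in> ball z R" using lineR[OF x] by (auto simp: T_def)
          then show ?thesis using N n by (auto simp: \<psi>_def less_imp_le)
        qed
      qed
      moreover have "(\<psi> has_field_derivative (D n x (axis i 1) - G x i)) (at 0)"
        unfolding \<psi>_def using DERIV_diff[OF fline[OF x T0, of n i] Gd[OF x, of i]] by (simp add: axis_zero)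
      ultimately show "norm (D n x (axis i 1) - G x i) \<le> e / \<rho>" by (simp add: DERIV_imp_deriv)
    qed
  qed
  define Gv where "Gv x h = (\<Sum>i\<in>UNIV. h $ i * G x i)" for x h
  have SU: "S \<subseteq> U" using R by (auto simp: S_def)
  have lim: "(\<lambda>n. f n w) \<longlonglongrightarrow> g w" if "w \<in> ball z R" for w
    unfolding LIMSEQ_iff using uc that by blast
  have "\<exists>g2. \<forall>x\<in>S. (\<lambda>n. f n x) \<longlonglongrightarrow> g2 x \<and> (g2 has_derivative Gv x) (at x within S)"
  proof (rule has_derivative_sequence[where f' = D])
    show "convex S" by (simp add: S_def)
    show "(f n has_derivative D n x) (at x within S)" if "x \<in> S" for n x
      using D(1)[of x n] SU that by (auto intro: has_derivative_at_withinI)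
    show "\<forall>\<^sub>F n in sequentially. \<forall>x\<in>S. \<forall>h. norm (D n x h - Gv x h) \<le> e * norm h" if "e > 0" for e
    proof -
      define e1 where "e1 = e * \<rho> / real CARD('n)"
      have "e1 > 0" using that \<rho> by (simp add: e1_def)
      then obtain N where N: "\<forall>n\<ge>N. \<forall>x\<in>S. \<forall>i. norm (D n x (axis i 1) - G x i) \<le> e1 / \<rho>"
        using bound by blast
      show ?thesis unfolding eventually_sequentially
      proof (intro exI allI impI ballI)
        fix n x h assume n: "N \<le> n" and x: "x \<in> S"
        have lin: "linear (D n x)" using D(1)[of x n] SU x
          by (meson bounded_linear.linear has_derivative_bounded_linear subsetD)
        have "D n x h - Gv x h = (\<Sum>i\<in>UNIV. h $ i * (D n x (axis i 1) - G x i))"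
          unfolding clin_expand[OF lin D(2)[of x n, OF subsetD[OF SU x]], of h] Gv_def
          by (auto simp: algebra_simps sum_subtractf)
        also have "norm \<dots> \<le> (\<Sum>i\<in>(UNIV::'n set). norm h * (e1 / \<rho>))"
        proof (rule sum_norm_le)
          fix i :: 'n
          have "norm (h $ i * (D n x (axis i 1) - G x i)) = norm (h $ i) * norm (D n x (axis i 1) - G x i)"
            by (simp add: norm_mult)
          also have "\<dots> \<le> norm h * (e1 / \<rho>)"
            using N n x Finite_Cartesian_Product.norm_nth_le[of h i] by (intro mult_mono) auto
          finally show "norm (h $ i * (D n x (axis i 1) - G x i)) \<le> norm h * (e1 / \<rho>)" .
        qed
        also have "\<dots> = e * norm h" using \<rho> by (simp add: e1_def)
        finally show "norm (D n x h - Gv x h) \<le> e * norm h" .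
      qed
    qed
    show "z \<in> S" using R by (simp add: S_def)
    show "(\<lambda>n. f n z) \<longlonglongrightarrow> g z" using lim R by simp
  qed
  then obtain g2 where g2: "\<And>x. x \<in> S \<Longrightarrow> (\<lambda>n. f n x) \<longlonglongrightarrow> g2 x \<and> (g2 has_derivative Gv x) (at x within S)"
    by blast
  have zS: "z \<in> S" using R by (simp add: S_def)
  have eq: "g2 x = g x" if "x \<in> S" for x
  proof -
    have "x \<in> ball z R" using that R by (auto simp: S_def)
    from LIMSEQ_unique[OF conjunct1[OF g2[OF that]] lim[OF this]] show ?thesis .
  qed
  have "(g has_derivative Gv z) (at z within S)"
    by (rule has_derivative_transform_within_open[OF conjunct2[OF g2[OF zS]] _ zS]) (use eq in \<open>auto simp: S_def\<close>)
  then have "(g has_derivative Gv z) (at z)"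
    using at_within_open[OF zS] by (simp add: S_def)
  moreover have "\<forall>c v. Gv z (c *s v) = c * Gv z v"
    unfolding Gv_def by (simp add: sum_distrib_left mult.assoc)
  ultimately show "\<exists>D. (g has_derivative D) (at z) \<and> (\<forall>c v. D (c *s v) = c * D v)" by blast
qed


context
  fixes \<Omega> :: "(complex^'n) set" and H :: "(complex^'n \<Rightarrow> complex^'m) set"
    and ip :: "(complex^'n \<Rightarrow> complex^'m) \<Rightarrow> (complex^'n \<Rightarrow> complex^'m) \<Rightarrow> complex"
  assumes qf: "quasi_free \<Omega> H ip"
begin

lemma qf_zero: "(\<lambda>z. 0) \<in> H" using qf[unfolded quasi_free_def, THEN conjunct1] by blast
lemma qf_comb: "F \<in> H \<Longrightarrow> G \<in> H \<Longrightarrow> (\<lambda>z. c *s F z + G z) \<in> H" using qf[unfolded quasi_free_def, THEN conjunct2, THEN conjunct1] by blast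
lemma qf_vanish: "F \<in> H \<Longrightarrow> z \<notin> \<Omega> \<Longrightarrow> F z = 0" using qf[unfolded quasi_free_def, THEN conjunct2, THEN conjunct2, THEN conjunct1] by blast
lemma qf_lin: "F \<in> H \<Longrightarrow> G \<in> H \<Longrightarrow> K \<in> H \<Longrightarrow> ip (\<lambda>z. c *s F z + G z) K = c * ip F K + ip G K"
  using qf[unfolded quasi_free_def, THEN conjunct2, THEN conjunct2, THEN conjunct2, THEN conjunct1] by blast
lemma qf_sym: "F \<in> H \<Longrightarrow> G \<in> H \<Longrightarrow> ip F G = cnj (ip G F)" using qf[unfolded quasi_free_def, THEN conjunct2, THEN conjunct2, THEN conjunct2, THEN conjunct2, THEN conjunct1] by blast
lemma qf_pos: "F \<in> H \<Longrightarrow> Re (ip F F) \<ge> 0" using qf[unfolded quasi_free_def, THEN conjunct2, THEN conjunct2, THEN conjunct2, THEN conjunct2, THEN conjunct2, THEN conjunct1] by blast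
lemma qf_Atensor: "A_tensor \<Omega> \<subseteq> H" using qf[unfolded quasi_free_def, THEN conjunct2, THEN conjunct2, THEN conjunct2, THEN conjunct2, THEN conjunct2, THEN conjunct2, THEN conjunct2, THEN conjunct1] by blast
lemma qf_dense: "F \<in> H \<Longrightarrow> e > 0 \<Longrightarrow> \<exists>G\<in>A_tensor \<Omega>. hnorm ip (\<lambda>z. F z - G z) < e"
  using qf[unfolded quasi_free_def, THEN conjunct2, THEN conjunct2, THEN conjunct2, THEN conjunct2, THEN conjunct2, THEN conjunct2, THEN conjunct2, THEN conjunct2, THEN conjunct1] by blast
lemma qf_local: "z \<in> \<Omega> \<Longrightarrow> \<exists>r>0. \<exists>C. \<forall>w\<in>ball z r \<inter> \<Omega>. \<forall>F\<in>H. norm (F w) \<le> C * hnorm ip F"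
  using qf[unfolded quasi_free_def, THEN conjunct2, THEN conjunct2, THEN conjunct2, THEN conjunct2, THEN conjunct2, THEN conjunct2, THEN conjunct2, THEN conjunct2, THEN conjunct2, THEN conjunct1] by blast
lemma qf_mult: "\<phi> \<in> A_alg \<Omega> \<Longrightarrow> F \<in> H \<Longrightarrow> mult \<phi> F \<in> H"
  using qf[unfolded quasi_free_def, THEN conjunct2, THEN conjunct2, THEN conjunct2, THEN conjunct2, THEN conjunct2, THEN conjunct2, THEN conjunct2, THEN conjunct2, THEN conjunct2, THEN conjunct2, THEN conjunct1] by blast

lemma qf_add: "F \<in> H \<Longrightarrow> G \<in> H \<Longrightarrow> (\<lambda>z. F z + G z) \<in> H"
  using qf_comb[of F G 1] by simp
lemma qf_scale: "F \<in> H \<Longrightarrow> (\<lambda>z. c *s F z) \<in> H"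
  using qf_comb[OF _ qf_zero, of F c] by simp
lemma qf_diff: "F \<in> H \<Longrightarrow> G \<in> H \<Longrightarrow> (\<lambda>z. F z - G z) \<in> H"
proof -
  assume "F \<in> H" "G \<in> H"
  from qf_comb[OF \<open>G \<in> H\<close> \<open>F \<in> H\<close>, of "-1"] show ?thesis
    by (simp add: vector_sneg_minus1[symmetric])
qed
lemma qf_sum: "finite I \<Longrightarrow> (\<And>i. i \<in> I \<Longrightarrow> T i \<in> H) \<Longrightarrow> (\<lambda>z. \<Sum>i\<in>I. T i z) \<in> H"
  by (induction I rule: finite_induct) (auto intro: qf_add qf_zero)

lemma ip_zero_left: "K \<in> H \<Longrightarrow> ip (\<lambda>z. 0) K = 0"
  using qf_lin[OF qf_zero qf_zero, of K 1] by simp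

lemma ip_scale_left: "F \<in> H \<Longrightarrow> K \<in> H \<Longrightarrow> ip (\<lambda>z. c *s F z) K = c * ip F K"
  using qf_lin[OF _ qf_zero, of F K c] ip_zero_left by simp

lemma ip_add_left: "F \<in> H \<Longrightarrow> G \<in> H \<Longrightarrow> K \<in> H \<Longrightarrow> ip (\<lambda>z. F z + G z) K = ip F K + ip G K"
  using qf_lin[of F G K 1] by simp

lemma quad_cs:
  fixes A b D :: real
  assumes q: "\<And>t. 0 \<le> t\<^sup>2 * A + 2 * t * b + D" and A: "A \<ge> 0" and D: "D \<ge> 0"
  shows "b \<le> sqrt A * sqrt D"
proof -
  have "b\<^sup>2 \<le> A * D"
  proof (cases "A = 0")
    case True
    have "b = 0"
    proof (rule ccontr)
      assume "b \<noteq> 0"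
      have "0 \<le> (-(D+1)/(2*b))\<^sup>2 * A + 2 * (-(D+1)/(2*b)) * b + D" by (rule q)
      also have "\<dots> = -1" using True \<open>b \<noteq> 0\<close> by (simp add: field_simps)
      finally show False by simp
    qed
    then show ?thesis using True by simp
  next
    case False
    then have Ap: "A > 0" using A by simp
    have "0 \<le> (-b/A)\<^sup>2 * A + 2 * (-b/A) * b + D" by (rule q)
    also have "\<dots> = D - b\<^sup>2 / A" using Ap by (simp add: field_simps power2_eq_square)
    finally show ?thesis using Ap by (simp add: field_simps)
  qed
  then have "sqrt (b\<^sup>2) \<le> sqrt (A * D)" by (rule real_sqrt_le_mono)
  then show ?thesis by (simp add: real_sqrt_mult)
qed

lemma ip_expand:
  assumes F: "F \<in> H" and G: "G \<in> H"
  shows "Re (ip (\<lambda>z. c *s F z + G z) (\<lambda>z. c *s F z + G z)) =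
     (cmod c)\<^sup>2 * Re (ip F F) + 2 * Re (c * ip F G) + Re (ip G G)"
proof -
  let ?T = "\<lambda>z. c *s F z + G z"
  have T: "?T \<in> H" using qf_comb[OF F G] .
  have "ip ?T ?T = c * ip F ?T + ip G ?T" using qf_lin[OF F G T] .
  also have "ip F ?T = cnj (c * ip F F + ip G F)" using qf_sym[OF F T] qf_lin[OF F G F] by simp
  also have "ip G ?T = cnj (c * ip F G + ip G G)" using qf_sym[OF G T] qf_lin[OF F G G] by simp
  finally have e: "ip ?T ?T = c * cnj c * cnj (ip F F) + c * cnj (ip G F) + cnj c * cnj (ip F G) + cnj (ip G G)"
    by (simp add: algebra_simps)
  have s1: "cnj (ip G F) = ip F G" using qf_sym[OF F G] by simp
  have "cnj c * cnj (ip F G) = cnj (c * ip F G)" by simp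
  then have "Re (cnj c * cnj (ip F G)) = Re (c * ip F G)" by (metis cnj.sel(1))
  moreover have "c * cnj c = of_real ((cmod c)\<^sup>2)" by (rule complex_norm_square[symmetric])
  ultimately show ?thesis unfolding e s1 by simp
qed

lemma hnorm_triangle:
  assumes F: "F \<in> H" and G: "G \<in> H"
  shows "hnorm ip (\<lambda>z. F z + G z) \<le> hnorm ip F + hnorm ip G"
proof -
  have cs: "Re (ip F G) \<le> sqrt (Re (ip F F)) * sqrt (Re (ip G G))"
  proof (rule quad_cs)
    fix t :: real
    have "0 \<le> Re (ip (\<lambda>z. of_real t *s F z + G z) (\<lambda>z. of_real t *s F z + G z))"
      using qf_pos[OF qf_comb[OF F G]] .
    also have "\<dots> = t\<^sup>2 * Re (ip F F) + 2 * t * Re (ip F G) + Re (ip G G)"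
      using ip_expand[OF F G, of "of_real t"] by simp
    finally show "0 \<le> t\<^sup>2 * Re (ip F F) + 2 * t * Re (ip F G) + Re (ip G G)" .
  qed (use qf_pos F G in auto)
  have "Re (ip (\<lambda>z. F z + G z) (\<lambda>z. F z + G z)) = Re (ip F F) + 2 * Re (ip F G) + Re (ip G G)"
    using ip_expand[OF F G, of 1] by simp
  also have "\<dots> \<le> (sqrt (Re (ip F F)) + sqrt (Re (ip G G)))\<^sup>2"
    using cs qf_pos[OF F] qf_pos[OF G] by (simp add: power2_eq_square algebra_simps)
  finally have "sqrt (Re (ip (\<lambda>z. F z + G z) (\<lambda>z. F z + G z))) \<le> sqrt ((sqrt (Re (ip F F)) + sqrt (Re (ip G G)))\<^sup>2)"
    by (rule real_sqrt_le_mono)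
  then show ?thesis unfolding hnorm_def using qf_pos[OF F] qf_pos[OF G] by simp
qed

lemma hnorm_scale:
  assumes F: "F \<in> H"
  shows "hnorm ip (\<lambda>z. c *s F z) = cmod c * hnorm ip F"
proof -
  have "Re (ip (\<lambda>z. c *s F z + (\<lambda>z. 0) z) (\<lambda>z. c *s F z + (\<lambda>z. 0) z)) = (cmod c)\<^sup>2 * Re (ip F F)"
    using ip_expand[OF F qf_zero, of c] ip_zero_left[OF qf_zero] qf_sym[OF F qf_zero] ip_zero_left[OF F] by simp
  then have "Re (ip (\<lambda>z. c *s F z) (\<lambda>z. c *s F z)) = (cmod c)\<^sup>2 * Re (ip F F)" by simp
  then show ?thesis unfolding hnorm_def by (simp add: real_sqrt_mult)
qed

lemma hnorm_nonneg: "F \<in> H \<Longrightarrow> hnorm ip F \<ge> 0"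
  unfolding hnorm_def using qf_pos by simp

lemma hnorm_zero: "hnorm ip (\<lambda>z. 0) = 0"
  unfolding hnorm_def using ip_zero_left[OF qf_zero] by simp

lemma hnorm_sum: "finite I \<Longrightarrow> (\<And>i. i \<in> I \<Longrightarrow> T i \<in> H) \<Longrightarrow>
    hnorm ip (\<lambda>z. \<Sum>i\<in>I. T i z) \<le> (\<Sum>i\<in>I. hnorm ip (T i))"
proof (induction I rule: finite_induct)
  case empty then show ?case by (simp add: hnorm_zero)
next
  case (insert x F)
  have "hnorm ip (\<lambda>z. \<Sum>i\<in>insert x F. T i z) = hnorm ip (\<lambda>z. T x z + (\<Sum>i\<in>F. T i z))"
    using insert by simp
  also have "\<dots> \<le> hnorm ip (T x) + hnorm ip (\<lambda>z. \<Sum>i\<in>F. T i z)"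
    using insert by (intro hnorm_triangle qf_sum) auto
  also have "\<dots> \<le> hnorm ip (T x) + (\<Sum>i\<in>F. hnorm ip (T i))" using insert by simp
  finally show ?case using insert by simp
qed

end


definition Ej :: "(complex^'n) set \<Rightarrow> 'm \<Rightarrow> complex^'n \<Rightarrow> complex^'m" where
  "Ej \<Omega> j = (\<lambda>z. if z \<in> \<Omega> then axis j 1 else 0)"

lemma A_alg_indicator: "(\<lambda>z. if z \<in> \<Omega> then c else 0) \<in> A_alg \<Omega>"
  unfolding A_alg_def
proof (intro CollectI conjI allI impI)
  fix e :: real assume "e > 0"
  show "\<exists>g U. open U \<and> closure \<Omega> \<subseteq> U \<and> holo_on g U \<and> (\<forall>z\<in>\<Omega>. norm ((if z \<in> \<Omega> then c else 0) - g z) < e)"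
    by (rule exI[of _ "\<lambda>z. c"], rule exI[of _ UNIV]) (use \<open>e > 0\<close> in \<open>auto simp: holo_on_const\<close>)
qed auto

lemma A_alg_sub_const:
  assumes "\<phi> \<in> A_alg \<Omega>"
  shows "(\<lambda>z. \<phi> z - (if z \<in> \<Omega> then c else 0)) \<in> A_alg \<Omega>"
  unfolding A_alg_def
proof (intro CollectI conjI allI impI)
  fix z assume "z \<notin> \<Omega>" then show "\<phi> z - (if z \<in> \<Omega> then c else 0) = 0"
    using assms unfolding A_alg_def by auto
next
  fix e :: real assume "e > 0"
  then obtain g U where gU: "open U" "closure \<Omega> \<subseteq> U" "holo_on g U" "\<forall>z\<in>\<Omega>. norm (\<phi> z - g z) < e"
    using assms unfolding A_alg_def by blast
  show "\<exists>g U. open U \<and> closure \<Omega> \<subseteq> U \<and> holo_on g U \<and> (\<forall>z\<in>\<Omega>. norm ((\<phi> z - (if z \<in> \<Omega> then c else 0)) - g z) < e)"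
  proof (intro exI conjI)
    show "holo_on (\<lambda>z. g z + (- c)) U" using gU(3) by (intro holo_on_add holo_on_const)
    show "\<forall>z\<in>\<Omega>. norm ((\<phi> z - (if z \<in> \<Omega> then c else 0)) - (g z + (- c))) < e" using gU(4) by simp
  qed (use gU in auto)
qed

lemma A_alg_vanish: "\<phi> \<in> A_alg \<Omega> \<Longrightarrow> z \<notin> \<Omega> \<Longrightarrow> \<phi> z = 0"
  unfolding A_alg_def by auto

lemma Ej_Atensor: "Ej \<Omega> j \<in> A_tensor \<Omega>"
  unfolding A_tensor_def Ej_def
proof (intro CollectI allI)
  fix a
  have e: "(\<lambda>z. (if z \<in> \<Omega> then axis j (1::complex) else 0) $ a) = (\<lambda>z. if z \<in> \<Omega> then axis j 1 $ a else 0)"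
    by (rule ext) simp
  show "(\<lambda>z. (if z \<in> \<Omega> then axis j (1::complex) else 0) $ a) \<in> A_alg \<Omega>"
    unfolding e by (rule A_alg_indicator)
qed

lemma Atensor_comp: "A \<in> A_tensor \<Omega> \<Longrightarrow> (\<lambda>z. A z $ j) \<in> A_alg \<Omega>"
  unfolding A_tensor_def by auto

lemma Atensor_expand:
  assumes "A \<in> A_tensor \<Omega>"
  shows "A w = (\<Sum>j\<in>UNIV. (A w $ j) *s Ej \<Omega> j w)"
proof (cases "w \<in> \<Omega>")
  case True
  have "A w = (\<Sum>j\<in>UNIV. (A w $ j) *s axis j 1)" by (rule basis_expansion[symmetric])
  also have "\<dots> = (\<Sum>j\<in>UNIV. (A w $ j) *s Ej \<Omega> j w)" using True by (simp add: Ej_def)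
  finally show ?thesis .
next
  case False
  then have "A w $ j = 0" for j using A_alg_vanish[OF Atensor_comp[OF assms]] by auto
  then have "A w = 0" by (simp add: vec_eq_iff)
  then show ?thesis using False by (simp add: Ej_def)
qed

lemma small_zero:
  fixes x M :: real
  assumes "\<And>d. d > 0 \<Longrightarrow> x \<le> d * M" "M \<ge> 0"
  shows "x \<le> 0"
proof (rule ccontr)
  assume "\<not> x \<le> 0"
  then have "x > 0" by simp
  have "x \<le> (x / (2 * (M + 1))) * M" using assms(1)[of "x / (2 * (M + 1))"] \<open>x > 0\<close> assms(2) by simp
  also have "\<dots> < x"
  proof -
    have "0 \<le> M * x" using \<open>x > 0\<close> assms(2) by simp
    then have "0 < M * x + x * 2" using \<open>x > 0\<close> by linarith
    then show ?thesis using \<open>x > 0\<close> assms(2) by (simp add: field_simps)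
  qed
  finally show False by simp
qed

lemma A_alg_holo:
  assumes op: "open \<Omega>" and phi: "\<phi> \<in> A_alg \<Omega>"
  shows "holo_on \<phi> \<Omega>"
proof -
  have "\<forall>n::nat. \<exists>g. \<exists>U. open U \<and> closure \<Omega> \<subseteq> U \<and> holo_on g U \<and> (\<forall>z\<in>\<Omega>. norm (\<phi> z - g z) < 1 / (real n + 1))"
    using phi unfolding A_alg_def by auto
  then obtain g where g: "\<And>n. \<exists>U. open U \<and> closure \<Omega> \<subseteq> U \<and> holo_on (g n) U \<and> (\<forall>z\<in>\<Omega>. norm (\<phi> z - g n z) < 1 / (real n + 1))"
    by metis
  have hg: "holo_on (g n) \<Omega>" for n
    using g[of n] closure_subset by (meson holo_on_subset subset_trans)
  show ?thesis
  proof (rule holo_uniform_limit[OF op hg])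
    fix z assume "z \<in> \<Omega>"
    then obtain R where R: "R > 0" "ball z R \<subseteq> \<Omega>" using op open_contains_ball by blast
    show "\<exists>R>0. ball z R \<subseteq> \<Omega> \<and> (\<forall>e>0. \<exists>N. \<forall>n\<ge>N. \<forall>w\<in>ball z R. norm (g n w - \<phi> w) < e)"
    proof (intro exI[of _ R] conjI allI impI)
      fix e :: real assume "e > 0"
      obtain N :: nat where N: "1 / (real N + 1) < e" using \<open>e > 0\<close>
        by (metis add.commute nat_approx_posE of_nat_Suc)
      show "\<exists>N. \<forall>n\<ge>N. \<forall>w\<in>ball z R. norm (g n w - \<phi> w) < e"
      proof (intro exI[of _ N] allI impI ballI)
        fix n w assume "N \<le> n" "w \<in> ball z R"
        then have "norm (\<phi> w - g n w) < 1 / (real n + 1)" using g[of n] R by auto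
        also have "\<dots> \<le> 1 / (real N + 1)" using \<open>N \<le> n\<close> by (simp add: frac_le)
        finally show "norm (g n w - \<phi> w) < e" using N by (simp add: norm_minus_commute)
      qed
    qed (use R in auto)
  qed
qed

lemma H_holo:
  assumes qf: "quasi_free \<Omega> H ip" and op: "open \<Omega>" and F: "F \<in> H"
  shows "holo_on (\<lambda>w. F w $ a) \<Omega>"
proof -
  have "\<forall>n::nat. \<exists>G\<in>A_tensor \<Omega>. hnorm ip (\<lambda>z. F z - G z) < 1 / (real n + 1)"
    using qf_dense[OF qf F] by simp
  then obtain G where G: "\<And>n. G n \<in> A_tensor \<Omega>" "\<And>n. hnorm ip (\<lambda>z. F z - G n z) < 1 / (real n + 1)"
    by metis
  have hg: "holo_on (\<lambda>w. G n w $ a) \<Omega>" for n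
    using A_alg_holo[OF op Atensor_comp[OF G(1)]] .
  have GH: "G n \<in> H" for n using G(1) qf_Atensor[OF qf] by blast
  show ?thesis
  proof (rule holo_uniform_limit[OF op hg])
    fix z assume z: "z \<in> \<Omega>"
    obtain r C where rC: "r > 0" "\<forall>w\<in>ball z r \<inter> \<Omega>. \<forall>F\<in>H. norm (F w) \<le> C * hnorm ip F"
      using qf_local[OF qf z] by blast
    obtain R0 where R0: "R0 > 0" "ball z R0 \<subseteq> \<Omega>" using op z open_contains_ball by blast
    define R where "R = min r R0"
    have R: "R > 0" "ball z R \<subseteq> \<Omega>" "ball z R \<subseteq> ball z r" using R0 rC by (auto simp: R_def)
    show "\<exists>R>0. ball z R \<subseteq> \<Omega> \<and> (\<forall>e>0. \<exists>N. \<forall>n\<ge>N. \<forall>w\<in>ball z R. norm (G n w $ a - F w $ a) < e)"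
    proof (intro exI[of _ R] conjI allI impI)
      fix e :: real assume "e > 0"
      obtain N :: nat where N: "(\<bar>C\<bar> + 1) / (real N + 1) < e" using \<open>e > 0\<close>
      proof -
        obtain N :: nat where "(\<bar>C\<bar> + 1) / e < real N" using reals_Archimedean2 by blast
        then have "(\<bar>C\<bar> + 1) / (real N + 1) < e" using \<open>e > 0\<close>
          by (simp add: field_simps)
        then show ?thesis using that by blast
      qed
      show "\<exists>N. \<forall>n\<ge>N. \<forall>w\<in>ball z R. norm (G n w $ a - F w $ a) < e"
      proof (intro exI[of _ N] allI impI ballI)
        fix n w assume n: "N \<le> n" and w: "w \<in> ball z R"
        have KH: "(\<lambda>z. F z - G n z) \<in> H" using qf_diff[OF qf F GH] .
        have "norm (G n w $ a - F w $ a) = norm ((F w - G n w) $ a)" by (simp add: norm_minus_commute)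
        also have "\<dots> \<le> norm (F w - G n w)" by (rule Finite_Cartesian_Product.norm_nth_le)
        also have "\<dots> \<le> C * hnorm ip (\<lambda>z. F z - G n z)"
        proof -
          have wb: "w \<in> ball z r \<inter> \<Omega>" using w R by auto
          from rC(2)[rule_format, OF wb KH] show ?thesis by simp
        qed
        also have "\<dots> \<le> \<bar>C\<bar> * hnorm ip (\<lambda>z. F z - G n z)"
          using hnorm_nonneg[OF qf KH] by (simp add: mult_right_mono)
        also have "\<dots> \<le> (\<bar>C\<bar> + 1) * (1 / (real n + 1))"
          using G(2)[of n] hnorm_nonneg[OF qf KH] by (intro mult_mono) auto
        also have "\<dots> \<le> (\<bar>C\<bar> + 1) * (1 / (real N + 1))"
          using n by (intro mult_left_mono) (auto simp: frac_le)
        also have "\<dots> < e" using N by simp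
        finally show "norm (G n w $ a - F w $ a) < e" .
      qed
    qed (use R in auto)
  qed
qed


lemma mm_in: "module_map \<Omega> H ip H' ip' X \<Longrightarrow> F \<in> H \<Longrightarrow> X F \<in> H'"
  by (drule module_map_def[THEN iffD1, THEN conjunct1]) blast
lemma mm_lin: "module_map \<Omega> H ip H' ip' X \<Longrightarrow> F \<in> H \<Longrightarrow> G \<in> H \<Longrightarrow> X (\<lambda>z. c *s F z + G z) = (\<lambda>z. c *s X F z + X G z)"
  by (drule module_map_def[THEN iffD1, THEN conjunct2, THEN conjunct1]) blast
lemma mm_bdd: "module_map \<Omega> H ip H' ip' X \<Longrightarrow> \<exists>C. \<forall>F\<in>H. hnorm ip' (X F) \<le> C * hnorm ip F"
  by (drule module_map_def[THEN iffD1, THEN conjunct2, THEN conjunct2, THEN conjunct1]) blast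
lemma mm_mult: "module_map \<Omega> H ip H' ip' X \<Longrightarrow> \<phi> \<in> A_alg \<Omega> \<Longrightarrow> F \<in> H \<Longrightarrow> X (Defs.mult \<phi> F) = Defs.mult \<phi> (X F)"
  by (drule module_map_def[THEN iffD1, THEN conjunct2, THEN conjunct2, THEN conjunct2]) blast

lemma norm_smult_c: "norm (c *s (v::complex^'p)) = norm c * norm v"
proof -
  have "norm (c *s v) = L2_set (\<lambda>i. norm c * norm (v $ i)) UNIV"
    by (simp add: norm_vec_def norm_mult)
  also have "\<dots> = norm c * L2_set (\<lambda>i. norm (v $ i)) UNIV"
    by (rule L2_set_right_distrib[symmetric]) simp
  finally show ?thesis by (simp add: norm_vec_def)
qed

lemma local_abs:
  assumes qfK: "quasi_free \<Omega> K ipk" and z: "z \<in> \<Omega>"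
  obtains C where "C \<ge> 0" "\<And>F. F \<in> K \<Longrightarrow> norm (F z) \<le> C * hnorm ipk F"
proof -
  obtain r C where rC: "r > 0" "\<forall>w\<in>ball z r \<inter> \<Omega>. \<forall>F\<in>K. norm (F w) \<le> C * hnorm ipk F"
    using qf_local[OF qfK z] by blast
  have zb: "z \<in> ball z r \<inter> \<Omega>" using rC z by auto
  show ?thesis
  proof (rule that[of "\<bar>C\<bar>"])
    fix F assume F: "F \<in> K"
    have "norm (F z) \<le> C * hnorm ipk F" using rC(2) zb F by blast
    also have "\<dots> \<le> \<bar>C\<bar> * hnorm ipk F" using hnorm_nonneg[OF qfK F] by (simp add: mult_right_mono)
    finally show "norm (F z) \<le> \<bar>C\<bar> * hnorm ipk F" .
  qed simp
qed

context
  fixes \<Omega> :: "(complex^'n) set"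
    and H :: "(complex^'n \<Rightarrow> complex^'m) set"
    and ip :: "(complex^'n \<Rightarrow> complex^'m) \<Rightarrow> (complex^'n \<Rightarrow> complex^'m) \<Rightarrow> complex"
    and H' :: "(complex^'n \<Rightarrow> complex^'p) set"
    and ip' :: "(complex^'n \<Rightarrow> complex^'p) \<Rightarrow> (complex^'n \<Rightarrow> complex^'p) \<Rightarrow> complex"
    and X :: "(complex^'n \<Rightarrow> complex^'m) \<Rightarrow> (complex^'n \<Rightarrow> complex^'p)"
  assumes qf: "quasi_free \<Omega> H ip" and qf': "quasi_free \<Omega> H' ip'"
    and mm: "module_map \<Omega> H ip H' ip' X"
begin

lemma X_zero: "X (\<lambda>z. 0) = (\<lambda>z. 0)"
  using mm_lin[OF mm qf_zero[OF qf] qf_zero[OF qf], of "-1"] by simp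

lemma X_add: "F \<in> H \<Longrightarrow> G \<in> H \<Longrightarrow> X (\<lambda>z. F z + G z) = (\<lambda>z. X F z + X G z)"
  using mm_lin[OF mm, of F G 1] by simp

lemma X_diff: "F \<in> H \<Longrightarrow> G \<in> H \<Longrightarrow> X (\<lambda>z. F z - G z) = (\<lambda>z. X F z - X G z)"
  using mm_lin[OF mm, of G F "-1"] by (simp add: vector_sneg_minus1[symmetric])

lemma X_sum: "finite I \<Longrightarrow> (\<And>i. i \<in> I \<Longrightarrow> T i \<in> H) \<Longrightarrow> X (\<lambda>z. \<Sum>i\<in>I. T i z) = (\<lambda>z. \<Sum>i\<in>I. X (T i) z)"
proof (induction I rule: finite_induct)
  case empty then show ?case using X_zero by simp
next
  case (insert x I)
  have "X (\<lambda>z. \<Sum>i\<in>insert x I. T i z) = X (\<lambda>z. T x z + (\<Sum>i\<in>I. T i z))" using insert by simp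
  also have "\<dots> = (\<lambda>z. X (T x) z + X (\<lambda>z. \<Sum>i\<in>I. T i z) z)"
    using insert by (intro X_add qf_sum[OF qf]) auto
  finally show ?case using insert by simp
qed

lemma X_eval_Atensor:
  assumes A: "A \<in> A_tensor \<Omega>"
  shows "X A w = (\<Sum>j\<in>UNIV. (A w $ j) *s X (Ej \<Omega> j) w)"
proof -
  have EH: "Ej \<Omega> j \<in> H" for j using Ej_Atensor qf_Atensor[OF qf] by blast
  have MH: "Defs.mult (\<lambda>z. A z $ j) (Ej \<Omega> j) \<in> H" for j
    using qf_mult[OF qf Atensor_comp[OF A] EH] .
  have "A = (\<lambda>w. \<Sum>j\<in>UNIV. Defs.mult (\<lambda>z. A z $ j) (Ej \<Omega> j) w)"
    using Atensor_expand[OF A] by (auto simp: mult_def)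
  then have "X A = X (\<lambda>w. \<Sum>j\<in>UNIV. Defs.mult (\<lambda>z. A z $ j) (Ej \<Omega> j) w)" by simp
  also have "\<dots> = (\<lambda>w. \<Sum>j\<in>UNIV. X (Defs.mult (\<lambda>z. A z $ j) (Ej \<Omega> j)) w)"
    using MH by (intro X_sum) auto
  also have "\<dots> = (\<lambda>w. \<Sum>j\<in>UNIV. Defs.mult (\<lambda>z. A z $ j) (X (Ej \<Omega> j)) w)"
    using mm_mult[OF mm Atensor_comp[OF A] EH] by simp
  finally show ?thesis by (simp add: mult_def)
qed

lemma X_eval:
  assumes z: "z \<in> \<Omega>" and h: "h \<in> H"
  shows "X h z = (\<Sum>j\<in>UNIV. (h z $ j) *s X (Ej \<Omega> j) z)"
proof -
  obtain C where C: "C \<ge> 0" "\<And>F. F \<in> H \<Longrightarrow> norm (F z) \<le> C * hnorm ip F"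
    using local_abs[OF qf z] by blast
  obtain C' where C': "C' \<ge> 0" "\<And>F. F \<in> H' \<Longrightarrow> norm (F z) \<le> C' * hnorm ip' F"
    using local_abs[OF qf' z] by blast
  obtain B where B: "\<forall>F\<in>H. hnorm ip' (X F) \<le> B * hnorm ip F" using mm_bdd[OF mm] by blast
  define V where "V = (\<Sum>j\<in>UNIV. norm (X (Ej \<Omega> j) z))"
  define M where "M = C' * \<bar>B\<bar> + C * V"
  have M: "M \<ge> 0" using C(1) C'(1) unfolding M_def V_def by (intro add_nonneg_nonneg mult_nonneg_nonneg sum_nonneg) auto
  have "norm (X h z - (\<Sum>j\<in>UNIV. (h z $ j) *s X (Ej \<Omega> j) z)) \<le> 0"
  proof (rule small_zero[OF _ M])
    fix d :: real assume "d > 0"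
    then obtain A where A: "A \<in> A_tensor \<Omega>" "hnorm ip (\<lambda>w. h w - A w) < d"
      using qf_dense[OF qf h] by blast
    have AH: "A \<in> H" using A qf_Atensor[OF qf] by blast
    define K where "K = (\<lambda>w. h w - A w)"
    have KH: "K \<in> H" unfolding K_def using qf_diff[OF qf h AH] .
    have Kn: "hnorm ip K \<ge> 0" using hnorm_nonneg[OF qf KH] .
    have "X h z - (\<Sum>j\<in>UNIV. (h z $ j) *s X (Ej \<Omega> j) z)
        = X K z + (\<Sum>j\<in>UNIV. (A z $ j - h z $ j) *s X (Ej \<Omega> j) z)"
    proof -
      have e1: "X K z = X h z - X A z" using X_diff[OF h AH] by (simp add: K_def)
      have e2: "X A z = (\<Sum>j\<in>UNIV. (A z $ j) *s X (Ej \<Omega> j) z)" by (rule X_eval_Atensor[OF A(1)])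
      have e3: "(\<Sum>j\<in>UNIV. (A z $ j - h z $ j) *s X (Ej \<Omega> j) z) =
          (\<Sum>j\<in>UNIV. (A z $ j) *s X (Ej \<Omega> j) z) - (\<Sum>j\<in>UNIV. (h z $ j) *s X (Ej \<Omega> j) z)"
        by (simp add: vector_sub_rdistrib sum_subtractf)
      show ?thesis unfolding e1 e2 e3 by (simp add: algebra_simps)
    qed
    also have "norm \<dots> \<le> norm (X K z) + (\<Sum>j\<in>UNIV. norm ((A z $ j - h z $ j) *s X (Ej \<Omega> j) z))"
      by (rule order_trans[OF norm_triangle_ineq add_left_mono[OF norm_sum]])
    also have "\<dots> \<le> C' * (\<bar>B\<bar> * d) + (\<Sum>j\<in>UNIV. (C * d) * norm (X (Ej \<Omega> j) z))"
    proof (rule add_mono)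
      have "norm (X K z) \<le> C' * hnorm ip' (X K)" using C'(2) mm_in[OF mm KH] by blast
      also have "\<dots> \<le> C' * (\<bar>B\<bar> * d)"
      proof (rule mult_left_mono[OF _ C'(1)])
        have "hnorm ip' (X K) \<le> B * hnorm ip K" using B KH by blast
        also have "\<dots> \<le> \<bar>B\<bar> * hnorm ip K" using Kn by (simp add: mult_right_mono)
        also have "\<dots> \<le> \<bar>B\<bar> * d" using A(2) Kn by (simp add: K_def mult_left_mono)
        finally show "hnorm ip' (X K) \<le> \<bar>B\<bar> * d" .
      qed
      finally show "norm (X K z) \<le> C' * (\<bar>B\<bar> * d)" .
      show "(\<Sum>j\<in>UNIV. norm ((A z $ j - h z $ j) *s X (Ej \<Omega> j) z)) \<le> (\<Sum>j\<in>UNIV. (C * d) * norm (X (Ej \<Omega> j) z))"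
      proof (rule sum_mono)
        fix j
        have "norm (A z $ j - h z $ j) = norm (K z $ j)" by (simp add: K_def norm_minus_commute)
        also have "\<dots> \<le> norm (K z)" by (rule Finite_Cartesian_Product.norm_nth_le)
        also have "\<dots> \<le> C * hnorm ip K" using C(2)[OF KH] .
        also have "\<dots> \<le> C * d" using A(2) C(1) by (simp add: K_def mult_left_mono)
        finally have "norm (A z $ j - h z $ j) \<le> C * d" .
        then show "norm ((A z $ j - h z $ j) *s X (Ej \<Omega> j) z) \<le> (C * d) * norm (X (Ej \<Omega> j) z)"
          by (metis norm_smult_c mult_right_mono norm_ge_zero)
      qed
    qed
    also have "\<dots> = d * M" by (simp add: M_def V_def sum_distrib_left algebra_simps)
    finally show "norm (X h z - (\<Sum>j\<in>UNIV. (h z $ j) *s X (Ej \<Omega> j) z)) \<le> d * M" .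
  qed
  then show ?thesis by simp
qed

end


lemma loc_sub_char:
  fixes K :: "(complex^'n \<Rightarrow> complex^'p) set"
  assumes qfK: "quasi_free \<Omega> K ipk" and z: "z \<in> \<Omega>"
  shows "G \<in> loc_sub \<Omega> K ipk z \<longleftrightarrow> G \<in> K \<and> G z = 0"
proof
  assume G: "G \<in> loc_sub \<Omega> K ipk z"
  then have GK: "G \<in> K" unfolding loc_sub_def mem_Collect_eq by (rule conjunct1)
  obtain C where C: "C \<ge> 0" "\<And>F. F \<in> K \<Longrightarrow> norm (F z) \<le> C * hnorm ipk F"
    using local_abs[OF qfK z] by blast
  have Gall: "\<forall>\<epsilon>>0. \<exists>(n::nat) \<phi> h. (\<forall>i<n. \<phi> i \<in> A_alg \<Omega> \<and> \<phi> i z = 0 \<and> h i \<in> K) \<and>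
      hnorm ipk (\<lambda>w. G w - (\<Sum>i<n. Defs.mult (\<phi> i) (h i) w)) < \<epsilon>"
    using G unfolding loc_sub_def mem_Collect_eq by (rule conjunct2)
  have "norm (G z) \<le> 0"
  proof (rule small_zero[OF _ C(1)])
    fix d :: real assume "d > 0"
    from Gall[rule_format, OF this] obtain n :: nat and \<phi> h where nh: "\<forall>i<n. \<phi> i \<in> A_alg \<Omega> \<and> \<phi> i z = 0 \<and> h i \<in> K"
      and hn: "hnorm ipk (\<lambda>w. G w - (\<Sum>i<n. Defs.mult (\<phi> i) (h i) w)) < d"
      by blast
    have SK: "(\<lambda>w. \<Sum>i<n. Defs.mult (\<phi> i) (h i) w) \<in> K"
      using nh by (intro qf_sum[OF qfK] qf_mult[OF qfK]) auto
    have KK: "(\<lambda>w. G w - (\<Sum>i<n. Defs.mult (\<phi> i) (h i) w)) \<in> K"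
      using qf_diff[OF qfK GK SK] .
    have "G z = G z - (\<Sum>i<n. Defs.mult (\<phi> i) (h i) z)" using nh by (simp add: mult_def)
    then have "norm (G z) = norm ((\<lambda>w. G w - (\<Sum>i<n. Defs.mult (\<phi> i) (h i) w)) z)" by simp
    also have "\<dots> \<le> C * hnorm ipk (\<lambda>w. G w - (\<Sum>i<n. Defs.mult (\<phi> i) (h i) w))" using C(2)[OF KK] .
    also have "\<dots> \<le> C * d" using hn C(1) by (simp add: mult_left_mono)
    finally show "norm (G z) \<le> d * C" by (simp add: mult.commute)
  qed
  then show "G \<in> K \<and> G z = 0" using GK by simp
next
  assume "G \<in> K \<and> G z = 0"
  then have GK: "G \<in> K" and Gz: "G z = 0" by auto
  obtain C where C: "C \<ge> 0" "\<And>F. F \<in> K \<Longrightarrow> norm (F z) \<le> C * hnorm ipk F"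
    using local_abs[OF qfK z] by blast
  have EK: "Ej \<Omega> j \<in> K" for j using Ej_Atensor qf_Atensor[OF qfK] by blast
  define W where "W = (\<Sum>j\<in>(UNIV::'p set). hnorm ipk (Ej \<Omega> j))"
  have W: "W \<ge> 0" unfolding W_def using hnorm_nonneg[OF qfK EK] by (simp add: sum_nonneg)
  obtain b where b: "bij_betw b {0..<card (UNIV::'p set)} (UNIV::'p set)"
    using ex_bij_betw_nat_finite[of "UNIV::'p set"] by auto
  show "G \<in> loc_sub \<Omega> K ipk z"
    unfolding loc_sub_def
  proof (intro CollectI conjI allI impI GK)
    fix e :: real assume "e > 0"
    define d where "d = e / (1 + C * W)"
    have CW: "1 + C * W > 0" using C(1) W by (simp add: add_pos_nonneg)
    have d: "d > 0" using \<open>e > 0\<close> CW by (simp add: d_def)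
    obtain A where A: "A \<in> A_tensor \<Omega>" "hnorm ipk (\<lambda>w. G w - A w) < d"
      using qf_dense[OF qfK GK d] by blast
    have AK: "A \<in> K" using A qf_Atensor[OF qfK] by blast
    define c where "c j = A z $ j" for j
    define \<phi> where "\<phi> j = (\<lambda>w. A w $ j - (if w \<in> \<Omega> then c j else 0))" for j
    have \<phi>A: "\<phi> j \<in> A_alg \<Omega>" for j unfolding \<phi>_def by (rule A_alg_sub_const[OF Atensor_comp[OF A(1)]])
    have \<phi>z: "\<phi> j z = 0" for j using z by (simp add: \<phi>_def c_def)
    define n where "n = card (UNIV::'p set)"
    have sumeq: "(\<Sum>i<n. Defs.mult (\<phi> (b i)) (Ej \<Omega> (b i)) w) = (\<Sum>j\<in>UNIV. Defs.mult (\<phi> j) (Ej \<Omega> j) w)" for w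
      using sum.reindex_bij_betw[OF b, of "\<lambda>j. Defs.mult (\<phi> j) (Ej \<Omega> j) w"]
      by (simp add: n_def atLeast0LessThan)
    have decomp: "G w - (\<Sum>j\<in>UNIV. Defs.mult (\<phi> j) (Ej \<Omega> j) w) = (G w - A w) + (\<Sum>j\<in>UNIV. c j *s Ej \<Omega> j w)" for w
    proof -
      have "(\<Sum>j\<in>UNIV. Defs.mult (\<phi> j) (Ej \<Omega> j) w) = (\<Sum>j\<in>UNIV. (A w $ j) *s Ej \<Omega> j w - c j *s Ej \<Omega> j w)"
        by (rule sum.cong) (auto simp: mult_def \<phi>_def Ej_def vector_sub_rdistrib)
      also have "\<dots> = A w - (\<Sum>j\<in>UNIV. c j *s Ej \<Omega> j w)"
        using Atensor_expand[OF A(1), of w] by (simp add: sum_subtractf)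
      finally show ?thesis by (simp add: algebra_simps)
    qed
    have cb: "norm (c j) \<le> C * d" for j
    proof -
      have "norm (c j) \<le> norm (A z)" unfolding c_def by (rule Finite_Cartesian_Product.norm_nth_le)
      also have "\<dots> = norm ((\<lambda>w. G w - A w) z)" using Gz by simp
      also have "\<dots> \<le> C * hnorm ipk (\<lambda>w. G w - A w)" using C(2)[OF qf_diff[OF qfK GK AK]] .
      also have "\<dots> \<le> C * d" using A(2) C(1) by (simp add: mult_left_mono)
      finally show ?thesis .
    qed
    have "hnorm ipk (\<lambda>w. G w - (\<Sum>i<n. Defs.mult (\<phi> (b i)) (Ej \<Omega> (b i)) w))
        = hnorm ipk (\<lambda>w. (G w - A w) + (\<Sum>j\<in>UNIV. c j *s Ej \<Omega> j w))"
      unfolding sumeq decomp ..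
    also have "\<dots> \<le> hnorm ipk (\<lambda>w. G w - A w) + hnorm ipk (\<lambda>w. \<Sum>j\<in>UNIV. c j *s Ej \<Omega> j w)"
      using qf_diff[OF qfK GK AK] qf_sum[OF qfK, of UNIV "\<lambda>j w. c j *s Ej \<Omega> j w"] qf_scale[OF qfK EK]
      by (intro hnorm_triangle[OF qfK]) auto
    also have "\<dots> < d + C * d * W"
    proof (rule add_less_le_mono[OF A(2)])
      have "hnorm ipk (\<lambda>w. \<Sum>j\<in>UNIV. c j *s Ej \<Omega> j w) \<le> (\<Sum>j\<in>UNIV. hnorm ipk (\<lambda>w. c j *s Ej \<Omega> j w))"
        using qf_scale[OF qfK EK] by (intro hnorm_sum[OF qfK]) auto
      also have "\<dots> = (\<Sum>j\<in>UNIV. norm (c j) * hnorm ipk (Ej \<Omega> j))"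
        using hnorm_scale[OF qfK EK] by simp
      also have "\<dots> \<le> (\<Sum>j\<in>UNIV. C * d * hnorm ipk (Ej \<Omega> j))"
        using cb hnorm_nonneg[OF qfK EK] by (intro sum_mono mult_right_mono) auto
      also have "\<dots> = C * d * W" by (simp add: W_def sum_distrib_left)
      finally show "hnorm ipk (\<lambda>w. \<Sum>j\<in>UNIV. c j *s Ej \<Omega> j w) \<le> C * d * W" .
    qed
    also have "\<dots> = e"
    proof -
      have "d + C * d * W = d * (1 + C * W)" by (simp add: algebra_simps)
      then show ?thesis using CW by (simp add: d_def)
    qed
    finally have fin: "hnorm ipk (\<lambda>w. G w - (\<Sum>i<n. Defs.mult (\<phi> (b i)) (Ej \<Omega> (b i)) w)) < e" .
    show "\<exists>(n::nat) \<phi> h. (\<forall>i<n. \<phi> i \<in> A_alg \<Omega> \<and> \<phi> i z = 0 \<and> h i \<in> K) \<and>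
             hnorm ipk (\<lambda>w. G w - (\<Sum>i<n. Defs.mult (\<phi> i) (h i) w)) < e"
      by (rule exI[of _ n], rule exI[of _ "\<lambda>i. \<phi> (b i)"], rule exI[of _ "\<lambda>i. Ej \<Omega> (b i)"])
        (use fin \<phi>A \<phi>z EK in auto)
  qed
qed


definition indepf :: "nat \<Rightarrow> (nat \<Rightarrow> complex^'p) \<Rightarrow> bool" where
  "indepf k u \<longleftrightarrow> (\<forall>c. (\<Sum>i<k. c i *s u i) = 0 \<longrightarrow> (\<forall>i<k. c i = 0))"

definition colv :: "('m \<Rightarrow> complex^'p) \<Rightarrow> ('p \<Rightarrow> 'm option) \<Rightarrow> 'p \<Rightarrow> complex^'p" where
  "colv v s r = (case s r of Some j \<Rightarrow> v j | None \<Rightarrow> axis r 1)"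

definition Mat :: "('m \<Rightarrow> complex^'p) \<Rightarrow> ('p \<Rightarrow> 'm option) \<Rightarrow> complex^'p^'p" where
  "Mat v s = (\<chi> a r. colv v s r $ a)"

definition Sk :: "nat \<Rightarrow> ('p \<Rightarrow> 'm option) set" where
  "Sk k = {s. k < card {r. s r \<noteq> None}}"

lemma column_Mat: "column r (Mat v s) = colv v s r"
  by (simp add: column_def Mat_def vec_eq_iff)

lemma det_indep:
  fixes A :: "complex^'p^'p"
  shows "det A \<noteq> 0 \<longleftrightarrow> (\<forall>c. (\<Sum>r\<in>UNIV. c r *s column r A) = 0 \<longrightarrow> (\<forall>r. c r = 0))"
  using invertible_det_nz[of A] invertible_left_inverse[of A]
    matrix_left_invertible_independent_columns[of A] by simp

lemma LA2:
  assumes s: "s \<in> Sk k" and d: "det (Mat v s) \<noteq> 0"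
  shows "\<exists>\<rho>. indepf (Suc k) (\<lambda>i. v (\<rho> i))"
proof -
  define R where "R = {r. s r \<noteq> None}"
  have "card {..<Suc k} \<le> card R" using s by (simp add: Sk_def R_def)
  then obtain f where f: "f ` {..<Suc k} \<subseteq> R" "inj_on f {..<Suc k}"
    using card_le_inj[of "{..<Suc k}" R] by auto
  define \<rho> where "\<rho> i = the (s (f i))" for i
  have col: "colv v s (f i) = v (\<rho> i)" if "i < Suc k" for i
    using f that by (auto simp: R_def \<rho>_def colv_def)
  have ind: "\<forall>c. (\<Sum>r\<in>UNIV. c r *s colv v s r) = 0 \<longrightarrow> (\<forall>r. c r = 0)"
    using d unfolding det_indep column_Mat .
  show ?thesis
  proof (rule exI[of _ \<rho>], unfold indepf_def, intro allI impI)
    fix c i assume sc: "(\<Sum>i<Suc k. c i *s v (\<rho> i)) = 0" and i: "i < Suc k"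
    define c' where "c' r = (if r \<in> f ` {..<Suc k} then c (inv_into {..<Suc k} f r) else 0)" for r
    have "(\<Sum>r\<in>UNIV. c' r *s colv v s r) = (\<Sum>r\<in>f ` {..<Suc k}. c' r *s colv v s r)"
      by (rule sum.mono_neutral_right) (auto simp: c'_def)
    also have "\<dots> = (\<Sum>l<Suc k. c' (f l) *s colv v s (f l))"
      by (rule sum.reindex[OF f(2), unfolded comp_def])
    also have "\<dots> = (\<Sum>l<Suc k. c l *s v (\<rho> l))"
      by (rule sum.cong) (auto simp: c'_def col inv_into_f_f[OF f(2)])
    finally have "(\<Sum>r\<in>UNIV. c' r *s colv v s r) = 0" using sc by simp
    then have "c' (f i) = 0" using ind by blast
    then show "c i = 0" using i by (simp add: c'_def inv_into_f_f[OF f(2)])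
  qed
qed

lemma indepf_inj:
  assumes "indepf k u"
  shows "inj_on u {..<k}"
proof (rule inj_onI, rule ccontr)
  fix i j assume i: "i \<in> {..<k}" and j: "j \<in> {..<k}" and e: "u i = u j" and ne: "i \<noteq> j"
  define c where "c l = (if l = i then 1 else 0) - (if l = j then 1 else (0::complex))" for l
  have "(\<Sum>l<k. c l *s u l) = (\<Sum>l<k. (if l = i then u l else 0)) - (\<Sum>l<k. (if l = j then u l else 0))"
    unfolding c_def vector_sub_rdistrib sum_subtractf by (intro arg_cong2[where f="(-)"] sum.cong) auto
  also have "\<dots> = 0" using i j e by simp
  finally have "c i = 0" using assms i unfolding indepf_def by blast
  then show False using ne by (simp add: c_def)
qed

lemma indepf_independent:
  assumes "indepf k u"
  shows "vec.independent (u ` {..<k})"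
proof
  assume dep: "vec.dependent (u ` {..<k})"
  obtain a where a: "\<exists>w\<in>u ` {..<k}. a w \<noteq> 0" "(\<Sum>w\<in>u ` {..<k}. a w *s w) = 0"
    using dep vec.dependent_finite[of "u ` {..<k}"] by auto
  have "(\<Sum>i<k. a (u i) *s u i) = (\<Sum>w\<in>u ` {..<k}. a w *s w)"
    using sum.reindex[OF indepf_inj[OF assms], of "\<lambda>w. a w *s w"] by simp
  then have "\<forall>i<k. a (u i) = 0" using a(2) assms unfolding indepf_def by auto
  then show False using a(1) by auto
qed

lemma LA1:
  fixes v :: "'m::finite \<Rightarrow> complex^'p"
  assumes U: "\<And>i. i < Suc k \<Longrightarrow> u i \<in> vec.span (range v)" and ind: "indepf (Suc k) u"
  shows "\<exists>s\<in>Sk k. det (Mat v s) \<noteq> 0"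
proof -
  obtain B0 where B0: "B0 \<subseteq> range v" "vec.independent B0" "range v \<subseteq> vec.span B0"
    using vec.maximal_independent_subset[of "range v"] by blast
  have fB0: "finite B0" using B0(1) by (rule finite_subset) simp
  have "u ` {..<Suc k} \<subseteq> vec.span B0"
  proof -
    have "vec.span (range v) \<subseteq> vec.span B0" using B0(3) by (intro vec.span_minimal) auto
    then show ?thesis using U by auto
  qed
  then have "card (u ` {..<Suc k}) \<le> card B0"
    using vec.independent_span_bound[OF fB0 indepf_independent[OF ind]] by blast
  then have kB0: "Suc k \<le> card B0" using card_image[OF indepf_inj[OF ind]] by simp
  obtain B1 where B1: "B0 \<subseteq> B1" "B1 \<subseteq> B0 \<union> cart_basis" "vec.independent B1" "B0 \<union> cart_basis \<subseteq> vec.span B1"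
    using vec.maximal_independent_subset_extend[of B0 "B0 \<union> cart_basis"] B0(2) by blast
  have fB1: "finite B1" using B1(2) by (rule finite_subset) (simp add: fB0 finite_cart_basis)
  have spanB1: "UNIV \<subseteq> vec.span B1"
  proof -
    have "vec.span cart_basis \<subseteq> vec.span B1" using B1(4) by (intro vec.span_minimal) auto
    then show ?thesis by simp
  qed
  have cardB1: "card B1 = CARD('p)"
    using vec.basis_card_eq_dim[of B1 UNIV] spanB1 B1(3) vec.dim_UNIV card_cart_basis by simp
  define Q where "Q = {q. axis q (1::complex) \<in> B1 - B0}"
  define R where "R = - Q"
  have axinj: "inj (\<lambda>q::'p. axis q (1::complex))" by (rule injI) (simp add: axis_eq_axis)
  have "(\<lambda>q. axis q 1) ` Q = B1 - B0"
    using B1(2) by (auto simp: Q_def cart_basis_def)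
  then have cQ: "card Q = card (B1 - B0)"
    using card_image[OF inj_on_subset[OF axinj, of Q]] by simp
  have "card (B1 - B0) = CARD('p) - card B0" using card_Diff_subset[OF fB0 B1(1)] cardB1 by simp
  moreover have "card R = CARD('p) - card Q"
  proof -
    have "R = UNIV - Q" by (auto simp: R_def)
    then show ?thesis using card_Diff_subset[of Q UNIV] by simp
  qed
  moreover have "card B0 \<le> CARD('p)" using card_mono[OF fB1 B1(1)] cardB1 by simp
  ultimately have cR: "card R = card B0" using cQ by simp
  obtain \<beta> where \<beta>: "bij_betw \<beta> R B0" using finite_same_card_bij[of R B0] cR fB0 by auto
  define s where "s r = (if r \<in> R then Some (SOME j. v j = \<beta> r) else None)" for r
  have vs: "v (SOME j. v j = \<beta> r) = \<beta> r" if "r \<in> R" for r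
  proof -
    have "\<beta> r \<in> range v" using \<beta> that B0(1) bij_betwE by blast
    then show ?thesis by (metis (mono_tags, lifting) imageE someI)
  qed
  have col: "colv v s r = (if r \<in> R then \<beta> r else axis r 1)" for r
    by (auto simp: colv_def s_def vs)
  have sS: "s \<in> Sk k"
  proof -
    have "{r. s r \<noteq> None} = R" by (auto simp: s_def)
    then show ?thesis using kB0 cR by (simp add: Sk_def)
  qed
  have colB1: "colv v s r \<in> B1" for r
    using \<beta> B1(1) by (auto simp: col Q_def R_def bij_betw_def)
  have colinj: "inj (colv v s)"
  proof (rule injI)
    fix r r' assume e: "colv v s r = colv v s r'"
    show "r = r'"
    proof (cases "r \<in> R"; cases "r' \<in> R")
      assume "r \<in> R" "r' \<in> R" then show ?thesis using e \<beta> by (auto simp: col bij_betw_def inj_on_def)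
    next
      assume "r \<in> R" "r' \<notin> R"
      then have "\<beta> r \<in> B0" "axis r' 1 \<notin> B0" using \<beta> by (auto simp: R_def Q_def bij_betw_def)
      then show ?thesis using e \<open>r \<in> R\<close> \<open>r' \<notin> R\<close> by (auto simp: col)
    next
      assume "r \<notin> R" "r' \<in> R"
      then have "\<beta> r' \<in> B0" "axis r 1 \<notin> B0" using \<beta> by (auto simp: R_def Q_def bij_betw_def)
      then show ?thesis using e \<open>r \<notin> R\<close> \<open>r' \<in> R\<close> by (auto simp: col)
    next
      assume "r \<notin> R" "r' \<notin> R"
      then show ?thesis using e by (auto simp: col axis_eq_axis)
    qed
  qed
  have indc: "vec.independent (range (colv v s))"
    using vec.independent_mono[OF B1(3)] colB1 by blast
  have "det (Mat v s) \<noteq> 0"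
    unfolding det_indep column_Mat
  proof (intro allI impI)
    fix c r assume sc: "(\<Sum>r\<in>UNIV. c r *s colv v s r) = 0"
    define a where "a w = c (inv (colv v s) w)" for w
    have "(\<Sum>w\<in>range (colv v s). a w *s w) = (\<Sum>r\<in>UNIV. c r *s colv v s r)"
      using sum.reindex[OF colinj, of "\<lambda>w. a w *s w"] by (simp add: a_def inv_f_f[OF colinj])
    then have "(\<Sum>w\<in>range (colv v s). a w *s w) = 0" using sc by simp
    then have "\<forall>w\<in>range (colv v s). a w = 0"
      using indc vec.dependent_finite[of "range (colv v s)"] by auto
    then show "c r = 0" by (auto simp: a_def inv_f_f[OF colinj])
  qed
  then show ?thesis using sS by blast
qed


lemma indepf_mono: "indepf k u \<Longrightarrow> k' \<le> k \<Longrightarrow> indepf k' u"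
  unfolding indepf_def
proof (intro allI impI)
  fix c' i assume ind: "\<forall>c. (\<Sum>i<k. c i *s u i) = 0 \<longrightarrow> (\<forall>i<k. c i = 0)" and kk: "k' \<le> k"
    and s: "(\<Sum>i<k'. c' i *s u i) = 0" and i: "i < k'"
  define c where "c i = (if i < k' then c' i else 0)" for i
  have "(\<Sum>i<k. c i *s u i) = (\<Sum>i<k'. c i *s u i)"
    using kk by (intro sum.mono_neutral_right) (auto simp: c_def)
  also have "\<dots> = (\<Sum>i<k'. c' i *s u i)" by (rule sum.cong) (auto simp: c_def)
  finally have "c i = 0" using ind s i kk by auto
  then show "c' i = 0" using i by (simp add: c_def)
qed

context
  fixes \<Omega> :: "(complex^'n) set"
    and H :: "(complex^'n \<Rightarrow> complex^'m) set"
    and ip :: "(complex^'n \<Rightarrow> complex^'m) \<Rightarrow> (complex^'n \<Rightarrow> complex^'m) \<Rightarrow> complex"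
    and H' :: "(complex^'n \<Rightarrow> complex^'p) set"
    and ip' :: "(complex^'n \<Rightarrow> complex^'p) \<Rightarrow> (complex^'n \<Rightarrow> complex^'p) \<Rightarrow> complex"
    and X :: "(complex^'n \<Rightarrow> complex^'m) \<Rightarrow> (complex^'n \<Rightarrow> complex^'p)"
  assumes qf: "quasi_free \<Omega> H ip" and qf': "quasi_free \<Omega> H' ip'"
    and mm: "module_map \<Omega> H ip H' ip' X"
begin

definition Prk :: "complex^'n \<Rightarrow> nat \<Rightarrow> bool" where
  "Prk z k \<longleftrightarrow> (\<exists>h. (\<forall>i<k. h i \<in> H) \<and> indepf k (\<lambda>i. X (h i) z))"

lemma rank_Pi:
  assumes z: "z \<in> \<Omega>"
  shows "loc_rank \<Omega> H H' ip' X z = Greatest (Prk z)"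
proof -
  have "(\<lambda>k. \<exists>h. (\<forall>i<k. h i \<in> H) \<and>
      (\<forall>c. (\<lambda>w. \<Sum>i<k. c i *s X (h i) w) \<in> loc_sub \<Omega> H' ip' z \<longrightarrow> (\<forall>i<k. c i = 0))) = Prk z"
  proof (rule ext)
    fix k
    have eq: "(\<forall>c. (\<lambda>w. \<Sum>i<k. c i *s X (h i) w) \<in> loc_sub \<Omega> H' ip' z \<longrightarrow> (\<forall>i<k. c i = 0))
        \<longleftrightarrow> indepf k (\<lambda>i. X (h i) z)" if h: "\<forall>i<k. h i \<in> H" for h
    proof -
      have "(\<lambda>w. \<Sum>i<k. c i *s X (h i) w) \<in> H'" for c
        using h by (intro qf_sum[OF qf'] qf_scale[OF qf'] mm_in[OF mm]) auto
      then have "(\<lambda>w. \<Sum>i<k. c i *s X (h i) w) \<in> loc_sub \<Omega> H' ip' z \<longleftrightarrow> (\<Sum>i<k. c i *s X (h i) z) = 0" for c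
        using loc_sub_char[OF qf' z] by simp
      then show ?thesis unfolding indepf_def by simp
    qed
    show "(\<exists>h. (\<forall>i<k. h i \<in> H) \<and>
      (\<forall>c. (\<lambda>w. \<Sum>i<k. c i *s X (h i) w) \<in> loc_sub \<Omega> H' ip' z \<longrightarrow> (\<forall>i<k. c i = 0))) = Prk z k"
      unfolding Prk_def using eq by blast
  qed
  then show ?thesis unfolding loc_rank_def by simp
qed

lemma Pi_Suc_iff:
  assumes z: "z \<in> \<Omega>"
  shows "Prk z (Suc k) \<longleftrightarrow> (\<exists>s\<in>Sk k. det (Mat (\<lambda>j. X (Ej \<Omega> j) z) s) \<noteq> 0)"
proof
  assume "Prk z (Suc k)"
  then obtain h where h: "\<forall>i<Suc k. h i \<in> H" "indepf (Suc k) (\<lambda>i. X (h i) z)" unfolding Prk_def by blast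
  show "\<exists>s\<in>Sk k. det (Mat (\<lambda>j. X (Ej \<Omega> j) z) s) \<noteq> 0"
  proof (rule LA1[OF _ h(2)])
    fix i assume "i < Suc k"
    then have "X (h i) z = (\<Sum>j\<in>UNIV. (h i z $ j) *s X (Ej \<Omega> j) z)"
      using X_eval[OF qf qf' mm z] h(1) by blast
    also have "\<dots> \<in> vec.span (range (\<lambda>j. X (Ej \<Omega> j) z))"
      by (intro vec.span_sum vec.span_scale vec.span_base) auto
    finally show "X (h i) z \<in> vec.span (range (\<lambda>j. X (Ej \<Omega> j) z))" .
  qed
next
  assume "\<exists>s\<in>Sk k. det (Mat (\<lambda>j. X (Ej \<Omega> j) z) s) \<noteq> 0"
  then obtain \<rho> where \<rho>: "indepf (Suc k) (\<lambda>i. X (Ej \<Omega> (\<rho> i)) z)" using LA2 by blast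
  have "Ej \<Omega> j \<in> H" for j using Ej_Atensor qf_Atensor[OF qf] by blast
  then show "Prk z (Suc k)" unfolding Prk_def using \<rho> by (intro exI[of _ "\<lambda>i. Ej \<Omega> (\<rho> i)"]) auto
qed

lemma Pi_bound:
  assumes z: "z \<in> \<Omega>" and P: "Prk z k"
  shows "k \<le> CARD('p)"
proof (rule ccontr)
  assume "\<not> k \<le> CARD('p)"
  then have "Suc CARD('p) \<le> k" by simp
  then have "Prk z (Suc CARD('p))" using P unfolding Prk_def by (meson indepf_mono less_le_trans not_less)
  then obtain s :: "'p \<Rightarrow> 'm option" where "s \<in> Sk CARD('p)" using Pi_Suc_iff[OF z] by blast
  then have "CARD('p) < card {r. s r \<noteq> None}" by (simp add: Sk_def)
  moreover have "card {r. s r \<noteq> None} \<le> CARD('p)" by (rule card_mono) auto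
  ultimately show False by simp
qed

lemma rank_ge_iff:
  assumes z: "z \<in> \<Omega>"
  shows "Suc k \<le> loc_rank \<Omega> H H' ip' X z \<longleftrightarrow> (\<exists>s\<in>Sk k. det (Mat (\<lambda>j. X (Ej \<Omega> j) z) s) \<noteq> 0)"
proof -
  have P0: "Prk z 0" unfolding Prk_def indepf_def by simp
  have bd: "\<And>y. Prk z y \<Longrightarrow> y \<le> CARD('p)" using Pi_bound[OF z] .
  have "Suc k \<le> Greatest (Prk z) \<longleftrightarrow> Prk z (Suc k)"
  proof
    assume le: "Suc k \<le> Greatest (Prk z)"
    have "Prk z (Greatest (Prk z))" using GreatestI_nat[of "Prk z" 0 "CARD('p)", OF P0 bd] .
    then obtain h where h: "\<forall>i<Greatest (Prk z). h i \<in> H" "indepf (Greatest (Prk z)) (\<lambda>i. X (h i) z)"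
      unfolding Prk_def by blast
    have "\<forall>i<Suc k. h i \<in> H" using h(1) le by auto
    moreover have "indepf (Suc k) (\<lambda>i. X (h i) z)" using indepf_mono[OF h(2) le] .
    ultimately show "Prk z (Suc k)" unfolding Prk_def by blast
  next
    assume "Prk z (Suc k)"
    then show "Suc k \<le> Greatest (Prk z)" using Greatest_le_nat[of "Prk z" "Suc k", OF _ bd] by blast
  qed
  then show ?thesis using rank_Pi[OF z] Pi_Suc_iff[OF z] by simp
qed

lemma det_holo:
  assumes op: "open \<Omega>"
  shows "holo_on (\<lambda>w. det (Mat (\<lambda>j. X (Ej \<Omega> j) w) s)) \<Omega>"
proof -
  have ent: "holo_on (\<lambda>w. Mat (\<lambda>j. X (Ej \<Omega> j) w) s $ a $ r) \<Omega>" for a r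
  proof (cases "s r")
    case None then show ?thesis by (simp add: Mat_def colv_def holo_on_const)
  next
    case (Some j)
    have "Ej \<Omega> j \<in> H" using Ej_Atensor qf_Atensor[OF qf] by blast
    then have "holo_on (\<lambda>w. X (Ej \<Omega> j) w $ a) \<Omega>" using H_holo[OF qf' op mm_in[OF mm]] by blast
    then show ?thesis using Some by (simp add: Mat_def colv_def)
  qed
  show ?thesis unfolding det_def
    by (intro holo_on_sum holo_on_mult holo_on_const holo_on_prod ent finite_permutations) auto
qed

end

theorem theorem1:
  fixes \<Omega> :: "(complex^'n) set"
    and H :: "(complex^'n \<Rightarrow> complex^'m) set"
    and ip :: "(complex^'n \<Rightarrow> complex^'m) \<Rightarrow> (complex^'n \<Rightarrow> complex^'m) \<Rightarrow> complex"
    and H' :: "(complex^'n \<Rightarrow> complex^'p) set"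
    and ip' :: "(complex^'n \<Rightarrow> complex^'p) \<Rightarrow> (complex^'n \<Rightarrow> complex^'p) \<Rightarrow> complex"
    and X :: "(complex^'n \<Rightarrow> complex^'m) \<Rightarrow> (complex^'n \<Rightarrow> complex^'p)"
  assumes "bounded_domain \<Omega>"
    and "quasi_free \<Omega> H ip"
    and "quasi_free \<Omega> H' ip'"
    and "module_map \<Omega> H ip H' ip' X"
  shows "\<forall>k::nat. analytic_subvariety \<Omega> {z\<in>\<Omega>. loc_rank \<Omega> H H' ip' X z = k}"
proof
  fix k :: nat
  note qf = assms(2) and qf' = assms(3) and mm = assms(4)
  have op: "open \<Omega>" using assms(1) by (simp add: bounded_domain_def)
  define fd where "fd s w = det (Mat (\<lambda>j. X (Ej \<Omega> j) w) s)" for s w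
  have hol: "holo_on (fd s) \<Omega>" for s unfolding fd_def using det_holo[OF qf qf' mm op] .
  have rk: "Suc k' \<le> loc_rank \<Omega> H H' ip' X z \<longleftrightarrow> (\<exists>s\<in>Sk k'. fd s z \<noteq> 0)" if "z \<in> \<Omega>" for z k'
    unfolding fd_def using rank_ge_iff[OF qf qf' mm that] .
  have fin: "finite (Sk k :: ('p \<Rightarrow> 'm option) set)" by (rule finite_subset[OF subset_UNIV]) simp
  obtain N :: nat and g :: "nat \<Rightarrow> 'p \<Rightarrow> 'm option" where Ng: "Sk k = g ` {i. i < (N::nat)}"
    using finite_imp_nat_seg_image_inj_on[OF fin] by blast
  show "analytic_subvariety \<Omega> {z\<in>\<Omega>. loc_rank \<Omega> H H' ip' X z = k}"
    unfolding analytic_subvariety_def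
  proof (intro conjI ballI)
    show "{z\<in>\<Omega>. loc_rank \<Omega> H H' ip' X z = k} \<subseteq> \<Omega>" by blast
    fix p0 assume p0: "p0 \<in> {z\<in>\<Omega>. loc_rank \<Omega> H H' ip' X z = k}"
    have "\<exists>U. open U \<and> p0 \<in> U \<and> U \<subseteq> \<Omega> \<and> (\<forall>w\<in>U. k \<le> loc_rank \<Omega> H H' ip' X w)"
    proof (cases k)
      case 0 then show ?thesis using op p0 by (intro exI[of _ \<Omega>]) auto
    next
      case (Suc k')
      then obtain s0 where s0S: "s0 \<in> Sk k'" and s0: "fd s0 p0 \<noteq> 0" using rk[of p0 k'] p0 by auto
      define U where "U = fd s0 -` (- {0}) \<inter> \<Omega>"
      have "continuous_on \<Omega> (fd s0)"
        using holo_on_cont[OF hol] by (simp add: continuous_at_imp_continuous_on)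
      then have "open U" unfolding U_def using continuous_on_open_vimage[OF op] by blast
      moreover have "\<forall>w\<in>U. k \<le> loc_rank \<Omega> H H' ip' X w"
      proof
        fix w assume "w \<in> U"
        then have "w \<in> \<Omega>" "fd s0 w \<noteq> 0" by (auto simp: U_def)
        moreover note s0S
        ultimately show "k \<le> loc_rank \<Omega> H H' ip' X w" using rk[of w k'] Suc by blast
      qed
      ultimately show ?thesis using p0 s0 by (intro exI[of _ U]) (auto simp: U_def)
    qed
    then obtain U where U: "open U" "p0 \<in> U" "U \<subseteq> \<Omega>" "\<forall>w\<in>U. k \<le> loc_rank \<Omega> H H' ip' X w" by blast
    show "\<exists>U. open U \<and> p0 \<in> U \<and> U \<subseteq> \<Omega> \<and> (\<exists>(N::nat) f. (\<forall>i<N. holo_on (f i) U) \<and>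
       {z\<in>\<Omega>. loc_rank \<Omega> H H' ip' X z = k} \<inter> U = {w\<in>U. \<forall>i<N. f i w = 0})"
    proof (intro exI[of _ U] conjI U(1,2,3) exI[of _ N] exI[of _ "\<lambda>i. fd (g i)"])
      show "\<forall>i<N. holo_on (fd (g i)) U" using hol holo_on_subset U(3) by blast
      show "{z\<in>\<Omega>. loc_rank \<Omega> H H' ip' X z = k} \<inter> U = {w\<in>U. \<forall>i<N. fd (g i) w = 0}"
      proof (intro set_eqI iffI)
        fix w assume w: "w \<in> {z\<in>\<Omega>. loc_rank \<Omega> H H' ip' X z = k} \<inter> U"
        then have "\<not> (\<exists>s\<in>Sk k. fd s w \<noteq> 0)" using rk[of w k] by auto
        then show "w \<in> {w\<in>U. \<forall>i<N. fd (g i) w = 0}" using w Ng by auto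
      next
        fix w assume w: "w \<in> {w\<in>U. \<forall>i<N. fd (g i) w = 0}"
        then have wO: "w \<in> \<Omega>" using U(3) by auto
        have "\<not> (\<exists>s\<in>Sk k. fd s w \<noteq> 0)" using w Ng by auto
        then have "\<not> Suc k \<le> loc_rank \<Omega> H H' ip' X w" using rk[OF wO] by blast
        moreover have "k \<le> loc_rank \<Omega> H H' ip' X w" using U(4) w by auto
        ultimately show "w \<in> {z\<in>\<Omega>. loc_rank \<Omega> H H' ip' X z = k} \<inter> U" using w wO by auto
      qed
    qed
  qed
qed

end
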